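(* Let $S$ be a quaternionic structure of local type of order $n$. (i) If $n$ is even and $-1=1$, then $M(S)=E_n$, the $n\times n$ matrix with $1$ on the anti-diagonal (entries $(i,n-1-i)$) and $0$ elsewhere. (ii) If $n$ is even and $-1\ne1$, then $M(S)$ is the $n\times n$ matrix with $M_{0,n-1}=M_{n-1,0}=M_{n-1,n-1}=1$, $M_{i,n-1-i}=1$ for $1\le i\le n-2$, and all other entries $0$. (iii) If $n$ is odd, then $M(S)$ is the $n\times n$ matrix with $M_{0,0}=1$, $M_{i,n-i}=1$ for $1\le i\le n-1$, and all other entries $0$.
   Context: A quaternionic structure is a triple $S=(G,-1,q)$ where $G$ is a multiplicative group in which every element is its own inverse (an $\mathbb F_2$-vector space), $-1\in G$ is distinguished (possibly $-1=1$), $-a:=(-1)a$, and $q:G\times G\to Q$ is surjective onto a set $Q$ with distinguished $0$, satisfying for all $a,b,c,d$: (Q1) $q(a,-a)=0$; (Q2) $q(a,b)=q(b,a)$; (Q3) $q(a,b)=q(a,c)\iff q(a,bc)=0$; (Q4) $q(a,b)=q(c,d)\iff\exists x$: $q(a,b)=q(a,x)=q(c,x)=q(c,d)$. The order is $\dim_{\mathbb F_2}G$. $S$ is nondegenerate if $\{a:q(a,x)=0\ \forall x\}=\{1\}$, and of local type if finite, nondegenerate, of order at least $3$, with exactly two quaternions. $B(S)$ is the abelian group (operation $\ast$) generated by $Q$ subject only to $q(a,b)\ast q(a,c)=q(a,bc)$. On $\mathbb N_0$, $\ast$ is bitwise XOR. A basis of $S$ is an ordered $\mathbb F_2$-basis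 $\mathcal A=(a_0,\dots,a_{n-1})$ of $G$ with $a_0=-1$ whenever $-1\ne1$. For an ordered basis $\mathcal B=(q_0,\dots,q_{m-1})$ of $B(S)$, $\phi_{\mathcal B}:B(S)\to(\{0,\dots,2^m-1\},\ast)$ is the isomorphism $q_k\mapsto2^k$, and $M_{\mathcal A,\mathcal B}(S)=(\phi_{\mathcal B}(q(a_i,a_j)))_{0\le i,j\le n-1}$. Matrices in $\mathrm{Mat}_n(\mathbb N_0)$ are ordered lexicographically, comparing entries row by row with the usual order on $\mathbb N_0$. The normal quaternionic matrix $M(S)$ is the lexicographic minimum of $M_{\mathcal A,\mathcal B}(S)$ over all bases $\mathcal A$ of $S$ and all ordered bases $\mathcal B$ of $B(S)$. *)

theory Defs
  imports "HOL-Algebra.Free_Abelian_Groups" "HOL-Algebra.Coset" "HOL-Library.List_Lexorder"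
begin

text \<open>A quaternionic structure S = (G, -1, q) is represented by a group G (HOL-Algebra
  monoid record), the distinguished element m (= -1), the map q on carrier G x carrier G
  and the distinguished element z (= 0) of Q.\<close>

definition quats :: "'a monoid \<Rightarrow> ('a \<Rightarrow> 'a \<Rightarrow> 'b) \<Rightarrow> 'b set" where
  "quats G q = (\<lambda>(a,b). q a b) ` (carrier G \<times> carrier G)"

definition quat_struct :: "'a monoid \<Rightarrow> 'a \<Rightarrow> ('a \<Rightarrow> 'a \<Rightarrow> 'b) \<Rightarrow> 'b \<Rightarrow> bool" where
  "quat_struct G m q z \<longleftrightarrow>
     group G \<and> (\<forall>x\<in>carrier G. x \<otimes>\<^bsub>G\<^esub> x = \<one>\<^bsub>G\<^esub>) \<and> m \<in> carrier G \<and> z \<in> quats G q \<and>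
     (\<forall>a\<in>carrier G. q a (m \<otimes>\<^bsub>G\<^esub> a) = z) \<and>
     (\<forall>a\<in>carrier G. \<forall>b\<in>carrier G. q a b = q b a) \<and>
     (\<forall>a\<in>carrier G. \<forall>b\<in>carrier G. \<forall>c\<in>carrier G. q a b = q a c \<longleftrightarrow> q a (b \<otimes>\<^bsub>G\<^esub> c) = z) \<and>
     (\<forall>a\<in>carrier G. \<forall>b\<in>carrier G. \<forall>c\<in>carrier G. \<forall>d\<in>carrier G.
        q a b = q c d \<longleftrightarrow> (\<exists>x\<in>carrier G. q a b = q a x \<and> q a x = q c x \<and> q c x = q c d))"

definition f2_basis :: "('c, 'd) monoid_scheme \<Rightarrow> 'c list \<Rightarrow> bool" where
  "f2_basis K bs \<longleftrightarrow> (\<forall>x\<in>carrier K. x \<otimes>\<^bsub>K\<^esub> x = \<one>\<^bsub>K\<^esub>) \<and> set bs \<subseteq> carrier K \<and>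
     bij_betw (\<lambda>I. finprod K (\<lambda>i. bs ! i) I) (Pow {..<length bs}) (carrier K)"

text \<open>Order = F2-dimension of G.\<close>
definition has_order :: "'a monoid \<Rightarrow> nat \<Rightarrow> bool" where
  "has_order G n \<longleftrightarrow> (\<exists>as. f2_basis G as \<and> length as = n)"

definition nondegenerate :: "'a monoid \<Rightarrow> ('a \<Rightarrow> 'a \<Rightarrow> 'b) \<Rightarrow> 'b \<Rightarrow> bool" where
  "nondegenerate G q z \<longleftrightarrow> {a\<in>carrier G. \<forall>x\<in>carrier G. q a x = z} = {\<one>\<^bsub>G\<^esub>}"

definition local_type :: "'a monoid \<Rightarrow> 'a \<Rightarrow> ('a \<Rightarrow> 'a \<Rightarrow> 'b) \<Rightarrow> 'b \<Rightarrow> bool" where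
  "local_type G m q z \<longleftrightarrow> quat_struct G m q z \<and> finite (carrier G) \<and> nondegenerate G q z \<and>
     (\<exists>n\<ge>3. has_order G n) \<and> card (quats G q) = 2"

definition qbasis :: "'a monoid \<Rightarrow> 'a \<Rightarrow> 'a list \<Rightarrow> bool" where
  "qbasis G m as \<longleftrightarrow> f2_basis G as \<and> (m \<noteq> \<one>\<^bsub>G\<^esub> \<longrightarrow> as \<noteq> [] \<and> as ! 0 = m)"

definition BS_rels :: "'a monoid \<Rightarrow> ('a \<Rightarrow> 'a \<Rightarrow> 'b) \<Rightarrow> ('b \<Rightarrow>\<^sub>0 int) set" where
  "BS_rels G q = {frag_of (q a b) + frag_of (q a c) - frag_of (q a (b \<otimes>\<^bsub>G\<^esub> c)) | a b c.
                    a \<in> carrier G \<and> b \<in> carrier G \<and> c \<in> carrier G}"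

definition BS_sub :: "'a monoid \<Rightarrow> ('a \<Rightarrow> 'a \<Rightarrow> 'b) \<Rightarrow> ('b \<Rightarrow>\<^sub>0 int) set" where
  "BS_sub G q = generate (free_Abelian_group (quats G q)) (BS_rels G q)"

definition BS :: "'a monoid \<Rightarrow> ('a \<Rightarrow> 'a \<Rightarrow> 'b) \<Rightarrow> ('b \<Rightarrow>\<^sub>0 int) set monoid" where
  "BS G q = free_Abelian_group (quats G q) Mod BS_sub G q"

definition BS_of :: "'a monoid \<Rightarrow> ('a \<Rightarrow> 'a \<Rightarrow> 'b) \<Rightarrow> 'b \<Rightarrow> ('b \<Rightarrow>\<^sub>0 int) set" where
  "BS_of G q x = r_coset (free_Abelian_group (quats G q)) (BS_sub G q) (frag_of x)"

definition phi :: "('c, 'd) monoid_scheme \<Rightarrow> 'c list \<Rightarrow> 'c \<Rightarrow> nat" where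
  "phi K bs y = (\<Sum>i\<in>(THE I. I \<subseteq> {..<length bs} \<and> finprod K (\<lambda>i. bs ! i) I = y). 2 ^ i)"

text \<open>Matrices are lists of rows; the list order from List_Lexorder on equal-length
  lists of equal-length rows is exactly the row-by-row lexicographic order.\<close>
definition qmat :: "'a monoid \<Rightarrow> ('a \<Rightarrow> 'a \<Rightarrow> 'b) \<Rightarrow> 'a list \<Rightarrow> ('b \<Rightarrow>\<^sub>0 int) set list
                      \<Rightarrow> nat list list" where
  "qmat G q as bs = map (\<lambda>i. map (\<lambda>j. phi (BS G q) bs (BS_of G q (q (as ! i) (as ! j))))
                       [0..<length as]) [0..<length as]"

definition normal_matrix :: "'a monoid \<Rightarrow> 'a \<Rightarrow> ('a \<Rightarrow> 'a \<Rightarrow> 'b) \<Rightarrow> nat list list" where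
  "normal_matrix G m q = Min {qmat G q as bs | as bs. qbasis G m as \<and> f2_basis (BS G q) bs}"

definition mat_of :: "nat \<Rightarrow> (nat \<Rightarrow> nat \<Rightarrow> nat) \<Rightarrow> nat list list" where
  "mat_of n f = map (\<lambda>i. map (\<lambda>j. f i j) [0..<n]) [0..<n]"

end

theory Submission
  imports Defs
begin

fun cmb :: "('a,'b) monoid_scheme \<Rightarrow> 'a list \<Rightarrow> nat set \<Rightarrow> 'a" where
  "cmb G [] I = \<one>\<^bsub>G\<^esub>"
| "cmb G (x#xs) I = (if 0 \<in> I then x \<otimes>\<^bsub>G\<^esub> cmb G xs {i. Suc i \<in> I} else cmb G xs {i. Suc i \<in> I})"

locale e2grp = comm_group G for G (structure) +
  assumes sq: "x \<in> carrier G \<Longrightarrow> x \<otimes> x = \<one>"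
begin

lemma sq2: "x \<in> carrier G \<Longrightarrow> y \<in> carrier G \<Longrightarrow> x \<otimes> (x \<otimes> y) = y"
  by (metis sq l_one m_assoc)

lemma sq3: "x \<in> carrier G \<Longrightarrow> y \<in> carrier G \<Longrightarrow> y \<otimes> x \<otimes> x = y"
  by (metis sq r_one m_assoc)

lemma sq4: "x \<in> carrier G \<Longrightarrow> y \<in> carrier G \<Longrightarrow> z \<in> carrier G \<Longrightarrow> x \<otimes> (y \<otimes> (x \<otimes> z)) = y \<otimes> z"
  by (metis sq2 m_lcomm m_closed)

lemma sq5: "x \<in> carrier G \<Longrightarrow> y \<in> carrier G \<Longrightarrow> x \<otimes> (y \<otimes> x) = y"
  by (metis sq2 m_comm)

lemma cmb_closed: "set xs \<subseteq> carrier G \<Longrightarrow> cmb G xs I \<in> carrier G"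
  by (induction xs arbitrary: I) auto

lemma cmb_cong: "(\<And>i. i < length xs \<Longrightarrow> i \<in> I \<longleftrightarrow> i \<in> J) \<Longrightarrow> cmb G xs I = cmb G xs J"
proof (induction xs arbitrary: I J)
  case Nil then show ?case by simp
next
  case (Cons x xs)
  have "cmb G xs {i. Suc i \<in> I} = cmb G xs {i. Suc i \<in> J}"
    by (rule Cons.IH) (use Cons.prems in auto)
  moreover have "0 \<in> I \<longleftrightarrow> 0 \<in> J" using Cons.prems by auto
  ultimately show ?case by simp
qed

lemma cmb_restrict: "cmb G xs I = cmb G xs (I \<inter> {..<length xs})"
  by (rule cmb_cong) auto

lemma cmb_append: "set xs \<subseteq> carrier G \<Longrightarrow> set ys \<subseteq> carrier G \<Longrightarrow>
   cmb G (xs @ ys) I = cmb G xs I \<otimes> cmb G ys {i. i + length xs \<in> I}"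
proof (induction xs arbitrary: I)
  case Nil then show ?case using cmb_closed by simp
next
  case (Cons x xs)
  have e: "{i. i + length xs \<in> {i. Suc i \<in> I}} = {i. i + length (x#xs) \<in> I}" by auto
  show ?case using Cons cmb_closed by (auto simp: e m_assoc)
qed

lemma finprod_cmb: "set xs \<subseteq> carrier G \<Longrightarrow> I \<subseteq> {..<length xs} \<Longrightarrow>
   finprod G (\<lambda>i. xs!i) I = cmb G xs I"
proof (induction xs arbitrary: I)
  case Nil then show ?case by simp
next
  case (Cons x xs)
  define J where "J = {i. Suc i \<in> I}"
  have J: "J \<subseteq> {..<length xs}" using Cons.prems by (auto simp: J_def)
  have IJ: "I - {0} = Suc ` J" by (auto simp: J_def) (metis not0_implies_Suc image_eqI mem_Collect_eq)
  have fin: "finite J" using J finite_subset by blast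
  have cj: "\<forall>i\<in>J. xs!i \<in> carrier G" using J Cons.prems(1) by (auto intro!: subsetD[OF _ nth_mem])
  have f: "finprod G (\<lambda>i. (x#xs)!i) (Suc ` J) = finprod G (\<lambda>i. xs!i) J"
    by (subst finprod_reindex) (use Cons.prems J cj in auto)
  have r: "finprod G (\<lambda>i. (x#xs)!i) (Suc ` J) = cmb G xs J"
    using f Cons.IH[OF _ J] Cons.prems by simp
  show ?case
  proof (cases "0 \<in> I")
    case True
    then have "I = insert 0 (Suc ` J)" using IJ by blast
    moreover have "finprod G (\<lambda>i. (x#xs)!i) (insert 0 (Suc ` J)) = x \<otimes> finprod G (\<lambda>i. (x#xs)!i) (Suc ` J)"
      using Cons.prems fin cj by (subst finprod_insert) (auto simp: Pi_def)
    ultimately have "finprod G (\<lambda>i. (x#xs)!i) I = x \<otimes> finprod G (\<lambda>i. (x#xs)!i) (Suc ` J)" by simp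
    then show ?thesis using True r by (simp add: J_def)
  next
    case False
    then have "I = Suc ` J" using IJ by blast
    then show ?thesis using False r by (simp add: J_def)
  qed
qed

end

locale bform = e2grp G for G (structure) +
  fixes B :: "'a \<Rightarrow> 'a \<Rightarrow> bool" and m :: 'a
  assumes fin: "finite (carrier G)"
  and Bsym: "a \<in> carrier G \<Longrightarrow> b \<in> carrier G \<Longrightarrow> B a b = B b a"
  and Blin: "a \<in> carrier G \<Longrightarrow> b \<in> carrier G \<Longrightarrow> c \<in> carrier G \<Longrightarrow> B a (b \<otimes> c) = (B a b \<noteq> B a c)"
  and nondeg: "a \<in> carrier G \<Longrightarrow> a \<noteq> \<one> \<Longrightarrow> \<exists>x\<in>carrier G. B a x"
  and mc: "m \<in> carrier G"
  and Bdiag: "a \<in> carrier G \<Longrightarrow> B a a = B a m"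
begin

lemma B_one[simp]: "a \<in> carrier G \<Longrightarrow> \<not> B a \<one>"
  using Blin[of a \<one> \<one>] by simp

lemma B_one'[simp]: "a \<in> carrier G \<Longrightarrow> \<not> B \<one> a"
  using B_one Bsym by (metis one_closed)

lemma Blin2: "a \<in> carrier G \<Longrightarrow> b \<in> carrier G \<Longrightarrow> c \<in> carrier G \<Longrightarrow> B (b \<otimes> c) a = (B b a \<noteq> B c a)"
  by (metis Blin Bsym m_closed)

lemma B_if[simp]: "a \<in> carrier G \<Longrightarrow> x \<in> carrier G \<Longrightarrow> B a (if c then x else \<one>) = (c \<and> B a x)"
  by auto

lemma B_if2[simp]: "a \<in> carrier G \<Longrightarrow> x \<in> carrier G \<Longrightarrow> B (if c then x else \<one>) a = (c \<and> B x a)"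
  by auto

lemma if_closed[simp]: "x \<in> carrier G \<Longrightarrow> (if c then x else \<one>) \<in> carrier G"
  by auto

lemma B_cmb_single:
  assumes "set xs \<subseteq> carrier G" "y \<in> carrier G"
    "\<And>k. k \<in> K \<Longrightarrow> k < length xs \<Longrightarrow> k \<noteq> k0 \<Longrightarrow> \<not> B y (xs!k)"
  shows "B y (cmb G xs K) = (k0 \<in> K \<and> k0 < length xs \<and> B y (xs!k0))"
  using assms
proof (induction xs arbitrary: K k0)
  case Nil then show ?case by simp
next
  case (Cons x xs)
  have c: "cmb G xs {i. Suc i \<in> K} \<in> carrier G" using Cons.prems cmb_closed by auto
  show ?case
  proof (cases k0)
    case 0
    have "B y (cmb G xs {i. Suc i \<in> K}) = False"
    proof -
      have "\<And>k. k \<in> {i. Suc i \<in> K} \<Longrightarrow> k < length xs \<Longrightarrow> k \<noteq> length xs \<Longrightarrow> \<not> B y (xs!k)"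
        using Cons.prems(3) 0 by force
      then show ?thesis using Cons.IH[of "{i. Suc i \<in> K}" "length xs"] Cons.prems by auto
    qed
    then show ?thesis using Cons.prems c 0 by (auto simp: Blin)
  next
    case (Suc k1)
    have "B y (cmb G xs {i. Suc i \<in> K}) = (k1 \<in> {i. Suc i \<in> K} \<and> k1 < length xs \<and> B y (xs!k1))"
    proof -
      have "\<And>k. k \<in> {i. Suc i \<in> K} \<Longrightarrow> k < length xs \<Longrightarrow> k \<noteq> k1 \<Longrightarrow> \<not> B y (xs!k)"
        using Cons.prems(3) Suc by force
      then show ?thesis using Cons.IH[of "{i. Suc i \<in> K}" k1] Cons.prems by auto
    qed
    moreover have "0 \<in> K \<Longrightarrow> \<not> B y x" using Cons.prems(3)[of 0] Suc by auto
    ultimately show ?thesis using Cons.prems c Suc by (auto simp: Blin)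
  qed
qed

definition subsp :: "'a set \<Rightarrow> bool" where
  "subsp W \<longleftrightarrow> W \<subseteq> carrier G \<and> \<one> \<in> W \<and> (\<forall>x\<in>W. \<forall>y\<in>W. x \<otimes> y \<in> W)"
definition altW :: "'a set \<Rightarrow> bool" where
  "altW W \<longleftrightarrow> (\<forall>w\<in>W. \<not> B w w)"
definition ndW :: "'a set \<Rightarrow> bool" where
  "ndW W \<longleftrightarrow> (\<forall>w\<in>W. w \<noteq> \<one> \<longrightarrow> (\<exists>x\<in>W. B w x))"

lemma subsp_carrier: "subsp (carrier G)" by (auto simp: subsp_def)
lemma nd_carrier: "ndW (carrier G)" using nondeg by (auto simp: ndW_def)

lemma pair_decomp:
  assumes W: "subsp W" and u: "u \<in> W" and v: "v \<in> W" and uv: "B u v" and uu: "\<not> B u u"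
  defines "W' \<equiv> {w\<in>W. \<not> B w u \<and> \<not> B w v}"
  shows "subsp W'"
    and "\<forall>w\<in>W. \<exists>w'\<in>W'. \<exists>a b. w = w' \<otimes> (if a then u else \<one>) \<otimes> (if b then v else \<one>)"
    and "card W = 4 * card W'"
    and "ndW W \<Longrightarrow> ndW W'"
proof -
  have Wc: "W \<subseteq> carrier G" using W by (auto simp: subsp_def)
  have uc: "u \<in> carrier G" and vc: "v \<in> carrier G" using u v Wc by auto
  have vu: "B v u" using uv Bsym uc vc by auto
  show S: "subsp W'" using W Wc uc vc by (auto simp: subsp_def W'_def Blin2 subset_iff)
  have W'c: "W' \<subseteq> W" by (auto simp: W'_def)
  have dec: "\<exists>w'\<in>W'. \<exists>a b. w = w' \<otimes> (if a then u else \<one>) \<otimes> (if b then v else \<one>)" if w: "w \<in> W" for w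
  proof -
    have wc: "w \<in> carrier G" using w Wc by auto
    define c2 where "c2 = B w u"
    define c1 where "c1 = (B w v \<noteq> (B w u \<and> B v v))"
    define w' where "w' = w \<otimes> (if c1 then u else \<one>) \<otimes> (if c2 then v else \<one>)"
    have w'W: "w' \<in> W" using W w u v by (auto simp: subsp_def w'_def)
    have "\<not> B w' u" using wc uc vc uu vu by (auto simp: w'_def c1_def c2_def Blin2)
    moreover have "\<not> B w' v" using wc uc vc uv by (auto simp: w'_def c1_def c2_def Blin2)
    moreover have "w = w' \<otimes> (if c1 then u else \<one>) \<otimes> (if c2 then v else \<one>)"
      using wc uc vc by (simp add: w'_def m_assoc sq2 sq sq4 sq5)
    ultimately show ?thesis using w'W unfolding W'_def by blast
  qed
  then show "\<forall>w\<in>W. \<exists>w'\<in>W'. \<exists>a b. w = w' \<otimes> (if a then u else \<one>) \<otimes> (if b then v else \<one>)" by blast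
  define f where "f = (\<lambda>(w'::'a, a::bool, b::bool). w' \<otimes> (if a then u else \<one>) \<otimes> (if b then v else \<one>))"
  have inj: "inj_on f (W' \<times> UNIV \<times> UNIV)"
  proof (rule inj_onI)
    fix p1 p2 assume p1: "p1 \<in> W' \<times> UNIV \<times> UNIV" and p2: "p2 \<in> W' \<times> UNIV \<times> UNIV" and e0: "f p1 = f p2"
    obtain w1 a1 b1 where p1e: "p1 = (w1, a1, b1)" by (cases p1) auto
    obtain w2 a2 b2 where p2e: "p2 = (w2, a2, b2)" by (cases p2) auto
    have w1: "w1 \<in> W'" and w2: "w2 \<in> W'" and e: "f (w1, a1, b1) = f (w2, a2, b2)"
      using p1 p2 e0 p1e p2e by auto
    have c1: "w1 \<in> carrier G" "\<not> B w1 u" "\<not> B w1 v" using w1 Wc by (auto simp: W'_def)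
    have c2: "w2 \<in> carrier G" "\<not> B w2 u" "\<not> B w2 v" using w2 Wc by (auto simp: W'_def)
    have "B (f (w1,a1,b1)) u = b1" using c1 uc vc uu vu by (simp add: f_def Blin2)
    moreover have "B (f (w2,a2,b2)) u = b2" using c2 uc vc uu vu by (simp add: f_def Blin2)
    ultimately have b: "b1 = b2" using e by simp
    have "B (f (w1,a1,b1)) v = (a1 \<noteq> (b1 \<and> B v v))" using c1 uc vc uv by (simp add: f_def Blin2)
    moreover have "B (f (w2,a2,b2)) v = (a2 \<noteq> (b2 \<and> B v v))" using c2 uc vc uv by (simp add: f_def Blin2)
    ultimately have a: "a1 = a2" using e b by auto
    have "w1 = f (w1,a1,b1) \<otimes> (if b1 then v else \<one>) \<otimes> (if a1 then u else \<one>)"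
      using c1 uc vc by (simp add: f_def m_assoc sq2 sq sq4 sq5)
    also have "\<dots> = w2" using c2 uc vc e a b by (simp add: f_def m_assoc sq2 sq sq4 sq5)
    finally show "p1 = p2" using a b p1e p2e by simp
  qed
  have img: "f ` (W' \<times> UNIV \<times> UNIV) = W"
  proof
    show "f ` (W' \<times> UNIV \<times> UNIV) \<subseteq> W" using W W'c u v by (auto simp: f_def subsp_def)
    show "W \<subseteq> f ` (W' \<times> UNIV \<times> UNIV)"
    proof
      fix w assume "w \<in> W"
      then obtain w' a b where "w' \<in> W'" "w = f (w', a, b)" using dec unfolding f_def by fastforce
      then show "w \<in> f ` (W' \<times> UNIV \<times> UNIV)" by blast
    qed
  qed
  show "card W = 4 * card W'"
  proof -
    have "card (UNIV :: (bool \<times> bool) set) = 4"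
      by (simp add: UNIV_Times_UNIV[symmetric] card_cartesian_product del: UNIV_Times_UNIV)
    then show ?thesis using card_image[OF inj] img by (simp add: card_cartesian_product)
  qed
  show "ndW W \<Longrightarrow> ndW W'"
  proof (unfold ndW_def, intro ballI impI)
    fix w assume nd: "\<forall>w\<in>W. w \<noteq> \<one> \<longrightarrow> (\<exists>x\<in>W. B w x)" and w: "w \<in> W'" and w1: "w \<noteq> \<one>"
    have wc: "w \<in> carrier G" "\<not> B w u" "\<not> B w v" using w Wc by (auto simp: W'_def)
    obtain x where x: "x \<in> W" "B w x" using nd w w1 W'c by blast
    obtain x' a b where x': "x' \<in> W'" "x = x' \<otimes> (if a then u else \<one>) \<otimes> (if b then v else \<one>)"
      using dec[OF x(1)] by blast
    have "x' \<in> carrier G" using x' Wc W'c by auto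
    then have "B w x = B w x'" using x' wc uc vc by (simp add: Blin)
    then show "\<exists>x\<in>W'. B w x" using x x' by blast
  qed
qed

end

context bform begin

lemma single_decomp:
  assumes W: "subsp W" and u: "u \<in> W" and uu: "B u u"
  defines "W' \<equiv> {w\<in>W. \<not> B w u}"
  shows "subsp W'"
    and "\<forall>w\<in>W. \<exists>w'\<in>W'. \<exists>a. w = w' \<otimes> (if a then u else \<one>)"
    and "card W = 2 * card W'"
    and "ndW W \<Longrightarrow> ndW W'"
proof -
  have Wc: "W \<subseteq> carrier G" using W by (auto simp: subsp_def)
  have uc: "u \<in> carrier G" using u Wc by auto
  show S: "subsp W'" using W Wc uc by (auto simp: subsp_def W'_def Blin2 subset_iff)
  have W'c: "W' \<subseteq> W" by (auto simp: W'_def)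
  have dec: "\<exists>w'\<in>W'. \<exists>a. w = w' \<otimes> (if a then u else \<one>)" if w: "w \<in> W" for w
  proof -
    have wc: "w \<in> carrier G" using w Wc by auto
    define w' where "w' = w \<otimes> (if B w u then u else \<one>)"
    have w'W: "w' \<in> W" using W w u by (auto simp: subsp_def w'_def)
    have "\<not> B w' u" using wc uc uu by (auto simp: w'_def Blin2)
    moreover have "w = w' \<otimes> (if B w u then u else \<one>)"
      using wc uc by (simp add: w'_def m_assoc sq2 sq sq4 sq5)
    ultimately show ?thesis using w'W unfolding W'_def by blast
  qed
  then show "\<forall>w\<in>W. \<exists>w'\<in>W'. \<exists>a. w = w' \<otimes> (if a then u else \<one>)" by blast
  define f where "f = (\<lambda>(w'::'a, a::bool). w' \<otimes> (if a then u else \<one>))"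
  have inj: "inj_on f (W' \<times> UNIV)"
  proof (rule inj_onI)
    fix p1 p2 assume p1: "p1 \<in> W' \<times> UNIV" and p2: "p2 \<in> W' \<times> UNIV" and e0: "f p1 = f p2"
    obtain w1 a1 where p1e: "p1 = (w1, a1)" by (cases p1) auto
    obtain w2 a2 where p2e: "p2 = (w2, a2)" by (cases p2) auto
    have w1: "w1 \<in> W'" and w2: "w2 \<in> W'" and e: "f (w1, a1) = f (w2, a2)"
      using p1 p2 e0 p1e p2e by auto
    have c1: "w1 \<in> carrier G" "\<not> B w1 u" using w1 Wc by (auto simp: W'_def)
    have c2: "w2 \<in> carrier G" "\<not> B w2 u" using w2 Wc by (auto simp: W'_def)
    have "B (f (w1,a1)) u = a1" using c1 uc uu by (simp add: f_def Blin2)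
    moreover have "B (f (w2,a2)) u = a2" using c2 uc uu by (simp add: f_def Blin2)
    ultimately have a: "a1 = a2" using e by simp
    have "w1 = f (w1,a1) \<otimes> (if a1 then u else \<one>)"
      using c1 uc by (simp add: f_def m_assoc sq2 sq sq4 sq5)
    also have "\<dots> = w2" using c2 uc e a by (simp add: f_def m_assoc sq2 sq sq4 sq5)
    finally show "p1 = p2" using a p1e p2e by simp
  qed
  have img: "f ` (W' \<times> UNIV) = W"
  proof
    show "f ` (W' \<times> UNIV) \<subseteq> W" using W W'c u by (auto simp: f_def subsp_def)
    show "W \<subseteq> f ` (W' \<times> UNIV)"
    proof
      fix w assume "w \<in> W"
      then obtain w' a where "w' \<in> W'" "w = f (w', a)" using dec unfolding f_def by fastforce
      then show "w \<in> f ` (W' \<times> UNIV)" by blast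
    qed
  qed
  show "card W = 2 * card W'"
    using card_image[OF inj] img by (simp add: card_cartesian_product)
  show "ndW W \<Longrightarrow> ndW W'"
  proof (unfold ndW_def, intro ballI impI)
    fix w assume nd: "\<forall>w\<in>W. w \<noteq> \<one> \<longrightarrow> (\<exists>x\<in>W. B w x)" and w: "w \<in> W'" and w1: "w \<noteq> \<one>"
    have wc: "w \<in> carrier G" "\<not> B w u" using w Wc by (auto simp: W'_def)
    obtain x where x: "x \<in> W" "B w x" using nd w w1 W'c by blast
    obtain x' a where x': "x' \<in> W'" "x = x' \<otimes> (if a then u else \<one>)"
      using dec[OF x(1)] by blast
    have "x' \<in> carrier G" using x' Wc W'c by auto
    then have "B w x = B w x'" using x' wc uc by (simp add: Blin)
    then show "\<exists>x\<in>W'. B w x" using x x' by blast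
  qed
qed

lemma nth_three:
  "i < length xs + 2 \<Longrightarrow> (u # xs @ [v]) ! i = (if i = 0 then u else if i \<le> length xs then xs ! (i - 1) else v)"
  by (cases i) (auto simp: nth_append)

lemma cmb_three:
  assumes "set xs \<subseteq> carrier G" "u \<in> carrier G" "v \<in> carrier G"
  shows "cmb G (u # xs @ [v]) {i. (i = 0 \<and> a) \<or> (i \<ge> 1 \<and> i - 1 \<in> I \<and> i - 1 < length xs) \<or> (i = length xs + 1 \<and> b)}
       = (if a then u else \<one>) \<otimes> cmb G xs I \<otimes> (if b then v else \<one>)"
proof -
  let ?J = "{i. Suc i \<in> {i. (i = 0 \<and> a) \<or> (i \<ge> 1 \<and> i - 1 \<in> I \<and> i - 1 < length xs) \<or> (i = length xs + 1 \<and> b)}}"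
  have "cmb G xs ?J = cmb G xs I" by (rule cmb_cong) auto
  moreover have "cmb G [v] {i. i + length xs \<in> ?J} = (if b then v else \<one>)" using assms by auto
  moreover have "cmb G xs I \<in> carrier G" using assms cmb_closed by auto
  moreover have "cmb G (xs @ [v]) ?J = cmb G xs ?J \<otimes> cmb G [v] {i. i + length xs \<in> ?J}"
    using assms by (intro cmb_append) auto
  moreover have "cmb G (u # (xs @ [v])) {i. (i = 0 \<and> a) \<or> (i \<ge> 1 \<and> i - 1 \<in> I \<and> i - 1 < length xs) \<or> (i = length xs + 1 \<and> b)}
     = (if a then u \<otimes> cmb G (xs @ [v]) ?J else cmb G (xs @ [v]) ?J)"
    by (simp only: cmb.simps) simp
  ultimately show ?thesis using assms by (simp add: m_assoc)
qed

lemma sympl: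
  assumes "subsp W" "altW W" "ndW W"
  shows "\<exists>xs. set xs \<subseteq> W \<and> even (length xs) \<and> card W = 2 ^ length xs
     \<and> (\<forall>w\<in>W. \<exists>I. cmb G xs I = w)
     \<and> (\<forall>i<length xs. \<forall>j<length xs. B (xs!i) (xs!j) = (i + j = length xs - 1))"
  using assms
proof (induction "card W" arbitrary: W rule: less_induct)
  case less
  have Wc: "W \<subseteq> carrier G" and W1: "\<one> \<in> W" using less.prems by (auto simp: subsp_def)
  have finW: "finite W" using Wc fin finite_subset by blast
  show ?case
  proof (cases "W = {\<one>}")
    case True
    then show ?thesis by (intro exI[of _ "[]"]) auto
  next
    case False
    then obtain u where u: "u \<in> W" "u \<noteq> \<one>" using W1 by blast
    then obtain v where v: "v \<in> W" "B u v" using less.prems(3) by (auto simp: ndW_def)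
    have uu: "\<not> B u u" using less.prems(2) u by (auto simp: altW_def)
    define W' where "W' = {w\<in>W. \<not> B w u \<and> \<not> B w v}"
    note pd = pair_decomp[OF less.prems(1) u(1) v(1) v(2) uu, folded W'_def]
    have W'W: "W' \<subseteq> W" by (auto simp: W'_def)
    have "card W' > 0" using pd(1) finW W'W finite_subset by (fastforce simp: subsp_def card_gt_0_iff)
    then have lt: "card W' < card W" using pd(3) by simp
    have alt': "altW W'" using less.prems(2) W'W by (auto simp: altW_def)
    obtain xs where xs: "set xs \<subseteq> W'" "even (length xs)" "card W' = 2 ^ length xs"
      "\<forall>w\<in>W'. \<exists>I. cmb G xs I = w"
      "\<forall>i<length xs. \<forall>j<length xs. B (xs!i) (xs!j) = (i + j = length xs - 1)"
      using less.hyps[OF lt pd(1) alt' pd(4)[OF less.prems(3)]] by blast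
    define ys where "ys = u # xs @ [v]"
    have uc: "u \<in> carrier G" and vc: "v \<in> carrier G" using u v Wc by auto
    have xsc: "set xs \<subseteq> carrier G" using xs(1) W'W Wc by auto
    have vu: "B v u" using v(2) Bsym[OF vc uc] by simp
    have vv: "\<not> B v v" using less.prems(2) v by (auto simp: altW_def)
    have xW': "\<And>k. k < length xs \<Longrightarrow> \<not> B (xs!k) u \<and> \<not> B (xs!k) v \<and> \<not> B u (xs!k) \<and> \<not> B v (xs!k)"
    proof -
      fix k assume "k < length xs"
      then have "xs!k \<in> W'" using xs(1) nth_mem by blast
      moreover have "xs!k \<in> carrier G" using \<open>xs!k \<in> W'\<close> W'W Wc by blast
      ultimately show "\<not> B (xs!k) u \<and> \<not> B (xs!k) v \<and> \<not> B u (xs!k) \<and> \<not> B v (xs!k)"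
        using uc vc Bsym[of u "xs!k"] Bsym[of v "xs!k"] by (simp add: W'_def)
    qed
    have "set ys \<subseteq> W" using xs(1) W'W u v by (auto simp: ys_def)
    moreover have "even (length ys)" using xs(2) by (simp add: ys_def)
    moreover have "card W = 2 ^ length ys" using pd(3) xs(3) by (simp add: ys_def)
    moreover have "\<forall>w\<in>W. \<exists>I. cmb G ys I = w"
    proof
      fix w assume "w \<in> W"
      then obtain w' a b where w': "w' \<in> W'" "w = w' \<otimes> (if a then u else \<one>) \<otimes> (if b then v else \<one>)"
        using pd(2) by blast
      obtain I where I: "cmb G xs I = w'" using xs(4) w'(1) by blast
      have "w = (if a then u else \<one>) \<otimes> cmb G xs I \<otimes> (if b then v else \<one>)"
      proof -
        have "w' \<in> carrier G" using I cmb_closed[OF xsc] by blast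
        then have "w' \<otimes> (if a then u else \<one>) = (if a then u else \<one>) \<otimes> w'"
          using uc by (intro m_comm) auto
        then show ?thesis using w'(2) I by simp
      qed
      then have "cmb G ys {i. (i = 0 \<and> a) \<or> (i \<ge> 1 \<and> i - 1 \<in> I \<and> i - 1 < length xs) \<or> (i = length xs + 1 \<and> b)} = w"
        unfolding ys_def using cmb_three[OF xsc uc vc, of a I b] by simp
      then show "\<exists>I. cmb G ys I = w" by blast
    qed
    moreover have "\<forall>i<length ys. \<forall>j<length ys. B (ys!i) (ys!j) = (i + j = length ys - 1)"
    proof (intro allI impI)
      fix i j assume i: "i < length ys" and j: "j < length ys"
      have ii: "i < length xs + 2" and jj: "j < length xs + 2" using i j by (auto simp: ys_def)
      have ly: "length ys = length xs + 2" by (simp add: ys_def)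
      have yi: "ys!i = (if i = 0 then u else if i \<le> length xs then xs ! (i - 1) else v)"
        unfolding ys_def by (rule nth_three[OF ii])
      have yj: "ys!j = (if j = 0 then u else if j \<le> length xs then xs ! (j - 1) else v)"
        unfolding ys_def by (rule nth_three[OF jj])
      show "B (ys!i) (ys!j) = (i + j = length ys - 1)"
      proof (cases "i = 0")
        case True
        then show ?thesis
        proof (cases "j = 0")
          case True then show ?thesis using \<open>i = 0\<close> yi yj ly uu by simp
        next
          case False
          then show ?thesis
          proof (cases "j \<le> length xs")
            case True then show ?thesis using \<open>i = 0\<close> \<open>j \<noteq> 0\<close> yi yj ly xW'[of "j - 1"] by simp
          next
            case False then show ?thesis using \<open>i = 0\<close> \<open>j \<noteq> 0\<close> yi yj ly v(2) jj by simp
          qed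
        qed
      next
        case i0: False
        show ?thesis
        proof (cases "i \<le> length xs")
          case iT: True
          show ?thesis
          proof (cases "j = 0")
            case True then show ?thesis using i0 iT yi yj ly xW'[of "i - 1"] by simp
          next
            case j0: False
            show ?thesis
            proof (cases "j \<le> length xs")
              case True
              have "B (xs ! (i - 1)) (xs ! (j - 1)) = ((i - 1) + (j - 1) = length xs - 1)"
                using xs(5) i0 iT j0 True by simp
              then show ?thesis using i0 iT j0 True yi yj ly by auto
            next
              case False then show ?thesis using i0 iT j0 yi yj ly xW'[of "i - 1"] jj by simp
            qed
          qed
        next
          case iF: False
          have il: "i = length xs + 1" using iF ii by simp
          show ?thesis
          proof (cases "j = 0")
            case True then show ?thesis using i0 iF il yi yj ly vu by simp
          next
            case j0: False
            show ?thesis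
            proof (cases "j \<le> length xs")
              case True then show ?thesis using i0 iF il j0 yi yj ly xW'[of "j - 1"] by simp
            next
              case False then show ?thesis using i0 iF il j0 yi yj ly vv jj by simp
            qed
          qed
        qed
      qed
    qed
    ultimately show ?thesis by blast
  qed
qed

end

context bform begin

definition gl :: "'a list \<Rightarrow> bool" where
  "gl xs \<longleftrightarrow> set xs \<subseteq> carrier G \<and> card (carrier G) = 2 ^ length xs \<and> (\<forall>g\<in>carrier G. \<exists>I. cmb G xs I = g)"

lemma constr1:
  assumes "m = \<one>"
  shows "\<exists>xs. gl xs \<and> even (length xs) \<and> (\<forall>i<length xs. \<forall>j<length xs. B (xs!i) (xs!j) = (j = length xs - 1 - i))"
proof -
  have "altW (carrier G)" using assms Bdiag by (auto simp: altW_def)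
  from sympl[OF subsp_carrier this nd_carrier] obtain xs where
    "set xs \<subseteq> carrier G" "even (length xs)" "card (carrier G) = 2 ^ length xs"
     "\<forall>w\<in>carrier G. \<exists>I. cmb G xs I = w"
     "\<forall>i<length xs. \<forall>j<length xs. B (xs!i) (xs!j) = (i + j = length xs - 1)" by blast
  then show ?thesis unfolding gl_def by (intro exI[of _ xs]) auto
qed

lemma constr2:
  assumes m1: "m \<noteq> \<one>" and mm: "\<not> B m m"
  shows "\<exists>xs. gl xs \<and> xs \<noteq> [] \<and> xs!0 = m \<and> even (length xs) \<and> (\<forall>i<length xs. \<forall>j<length xs. B (xs!i) (xs!j) =
     ((i = 0 \<and> j = length xs - 1) \<or> (i = length xs - 1 \<and> j = 0) \<or> (i = length xs - 1 \<and> j = length xs - 1)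
      \<or> (1 \<le> i \<and> i \<le> length xs - 2 \<and> j = length xs - 1 - i)))"
proof -
  obtain v where v: "v \<in> carrier G" "B m v" using nondeg[OF mc m1] by blast
  define W' where "W' = {w\<in>carrier G. \<not> B w m \<and> \<not> B w v}"
  note pd = pair_decomp[OF subsp_carrier mc v(1) v(2) mm, folded W'_def]
  have W'W: "W' \<subseteq> carrier G" by (auto simp: W'_def)
  have alt': "altW W'" using Bdiag by (auto simp: altW_def W'_def)
  obtain xs where xs: "set xs \<subseteq> W'" "even (length xs)" "card W' = 2 ^ length xs"
      "\<forall>w\<in>W'. \<exists>I. cmb G xs I = w"
      "\<forall>i<length xs. \<forall>j<length xs. B (xs!i) (xs!j) = (i + j = length xs - 1)"
    using sympl[OF pd(1) alt' pd(4)[OF nd_carrier]] by blast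
  define ys where "ys = m # xs @ [v]"
  have uc: "m \<in> carrier G" and vc: "v \<in> carrier G" using mc v by auto
  have xsc: "set xs \<subseteq> carrier G" using xs(1) W'W by auto
  have vu: "B v m" using v(2) Bsym[OF vc uc] by simp
  have vv: "B v v" using Bdiag[OF vc] vu by simp
  have xW': "\<And>k. k < length xs \<Longrightarrow> \<not> B (xs!k) m \<and> \<not> B (xs!k) v \<and> \<not> B m (xs!k) \<and> \<not> B v (xs!k)"
  proof -
    fix k assume "k < length xs"
    then have "xs!k \<in> W'" using xs(1) nth_mem by blast
    moreover have "xs!k \<in> carrier G" using \<open>xs!k \<in> W'\<close> W'W by blast
    ultimately show "\<not> B (xs!k) m \<and> \<not> B (xs!k) v \<and> \<not> B m (xs!k) \<and> \<not> B v (xs!k)"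
      using uc vc Bsym[of m "xs!k"] Bsym[of v "xs!k"] by (simp add: W'_def)
  qed
  have "set ys \<subseteq> carrier G" using xsc uc vc by (auto simp: ys_def)
  moreover have "card (carrier G) = 2 ^ length ys" using pd(3) xs(3) by (simp add: ys_def)
  moreover have "\<forall>w\<in>carrier G. \<exists>I. cmb G ys I = w"
  proof
    fix w assume "w \<in> carrier G"
    then obtain w' a b where w': "w' \<in> W'" "w = w' \<otimes> (if a then m else \<one>) \<otimes> (if b then v else \<one>)"
      using pd(2) by blast
    obtain I where I: "cmb G xs I = w'" using xs(4) w'(1) by blast
    have "w = (if a then m else \<one>) \<otimes> cmb G xs I \<otimes> (if b then v else \<one>)"
    proof -
      have "w' \<in> carrier G" using I cmb_closed[OF xsc] by blast
      then have "w' \<otimes> (if a then m else \<one>) = (if a then m else \<one>) \<otimes> w'"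
        using uc by (intro m_comm) auto
      then show ?thesis using w'(2) I by simp
    qed
    then have "cmb G ys {i. (i = 0 \<and> a) \<or> (i \<ge> 1 \<and> i - 1 \<in> I \<and> i - 1 < length xs) \<or> (i = length xs + 1 \<and> b)} = w"
      unfolding ys_def using cmb_three[OF xsc uc vc, of a I b] by simp
    then show "\<exists>I. cmb G ys I = w" by blast
  qed
  moreover have "\<forall>i<length ys. \<forall>j<length ys. B (ys!i) (ys!j) =
     ((i = 0 \<and> j = length ys - 1) \<or> (i = length ys - 1 \<and> j = 0) \<or> (i = length ys - 1 \<and> j = length ys - 1)
      \<or> (1 \<le> i \<and> i \<le> length ys - 2 \<and> j = length ys - 1 - i))"
  proof (intro allI impI)
    fix i j assume i: "i < length ys" and j: "j < length ys"
    have ii: "i < length xs + 2" and jj: "j < length xs + 2" using i j by (auto simp: ys_def)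
    have ly: "length ys = length xs + 2" by (simp add: ys_def)
    have yi: "ys!i = (if i = 0 then m else if i \<le> length xs then xs ! (i - 1) else v)"
      unfolding ys_def by (rule nth_three[OF ii])
    have yj: "ys!j = (if j = 0 then m else if j \<le> length xs then xs ! (j - 1) else v)"
      unfolding ys_def by (rule nth_three[OF jj])
    show "B (ys!i) (ys!j) = ((i = 0 \<and> j = length ys - 1) \<or> (i = length ys - 1 \<and> j = 0) \<or> (i = length ys - 1 \<and> j = length ys - 1)
      \<or> (1 \<le> i \<and> i \<le> length ys - 2 \<and> j = length ys - 1 - i))"
    proof (cases "i = 0")
      case True
      then show ?thesis
      proof (cases "j = 0")
        case True then show ?thesis using \<open>i = 0\<close> yi yj ly mm by simp
      next
        case False
        then show ?thesis
        proof (cases "j \<le> length xs")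
          case True then show ?thesis using \<open>i = 0\<close> \<open>j \<noteq> 0\<close> yi yj ly xW'[of "j - 1"] by simp
        next
          case False then show ?thesis using \<open>i = 0\<close> \<open>j \<noteq> 0\<close> yi yj ly v(2) jj by simp
        qed
      qed
    next
      case i0: False
      show ?thesis
      proof (cases "i \<le> length xs")
        case iT: True
        show ?thesis
        proof (cases "j = 0")
          case True then show ?thesis using i0 iT yi yj ly xW'[of "i - 1"] by simp
        next
          case j0: False
          show ?thesis
          proof (cases "j \<le> length xs")
            case True
            have "B (xs ! (i - 1)) (xs ! (j - 1)) = ((i - 1) + (j - 1) = length xs - 1)"
              using xs(5) i0 iT j0 True by simp
            then show ?thesis using i0 iT j0 True yi yj ly by auto
          next
            case False then show ?thesis using i0 iT j0 yi yj ly xW'[of "i - 1"] jj by simp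
          qed
        qed
      next
        case iF: False
        have il: "i = length xs + 1" using iF ii by simp
        show ?thesis
        proof (cases "j = 0")
          case True then show ?thesis using i0 iF il yi yj ly vu by simp
        next
          case j0: False
          show ?thesis
          proof (cases "j \<le> length xs")
            case True then show ?thesis using i0 iF il j0 yi yj ly xW'[of "j - 1"] by simp
          next
            case False then show ?thesis using i0 iF il j0 yi yj ly vv jj by simp
          qed
        qed
      qed
    qed
  qed
  ultimately show ?thesis unfolding gl_def using xs(2)
    by (intro exI[of _ ys]) (simp add: ys_def)
qed

lemma constr3:
  assumes mm: "B m m"
  shows "\<exists>xs. gl xs \<and> xs \<noteq> [] \<and> xs!0 = m \<and> odd (length xs) \<and> (\<forall>i<length xs. \<forall>j<length xs. B (xs!i) (xs!j) =
     ((i = 0 \<and> j = 0) \<or> (1 \<le> i \<and> i \<le> length xs - 1 \<and> j = length xs - i)))"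
proof -
  define W' where "W' = {w\<in>carrier G. \<not> B w m}"
  note pd = single_decomp[OF subsp_carrier mc mm, folded W'_def]
  have W'W: "W' \<subseteq> carrier G" by (auto simp: W'_def)
  have alt': "altW W'" using Bdiag by (auto simp: altW_def W'_def)
  obtain xs where xs: "set xs \<subseteq> W'" "even (length xs)" "card W' = 2 ^ length xs"
      "\<forall>w\<in>W'. \<exists>I. cmb G xs I = w"
      "\<forall>i<length xs. \<forall>j<length xs. B (xs!i) (xs!j) = (i + j = length xs - 1)"
    using sympl[OF pd(1) alt' pd(4)[OF nd_carrier]] by blast
  define ys where "ys = m # xs"
  have uc: "m \<in> carrier G" using mc by auto
  have xsc: "set xs \<subseteq> carrier G" using xs(1) W'W by auto
  have xW': "\<And>k. k < length xs \<Longrightarrow> \<not> B (xs!k) m \<and> \<not> B m (xs!k)"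
  proof -
    fix k assume "k < length xs"
    then have "xs!k \<in> W'" using xs(1) nth_mem by blast
    moreover have "xs!k \<in> carrier G" using \<open>xs!k \<in> W'\<close> W'W by blast
    ultimately show "\<not> B (xs!k) m \<and> \<not> B m (xs!k)"
      using uc Bsym[of m "xs!k"] by (simp add: W'_def)
  qed
  have "set ys \<subseteq> carrier G" using xsc uc by (auto simp: ys_def)
  moreover have "card (carrier G) = 2 ^ length ys" using pd(3) xs(3) by (simp add: ys_def)
  moreover have "\<forall>w\<in>carrier G. \<exists>I. cmb G ys I = w"
  proof
    fix w assume "w \<in> carrier G"
    then obtain w' a where w': "w' \<in> W'" "w = w' \<otimes> (if a then m else \<one>)"
      using pd(2) by blast
    obtain I where I: "cmb G xs I = w'" using xs(4) w'(1) by blast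
    have wc: "w' \<in> carrier G" using I cmb_closed[OF xsc] by blast
    have e: "{i. Suc i \<in> {i. (i = 0 \<and> a) \<or> (i \<ge> 1 \<and> i - 1 \<in> I)}} = I" by auto
    have "cmb G ys {i. (i = 0 \<and> a) \<or> (i \<ge> 1 \<and> i - 1 \<in> I)} = w"
      unfolding ys_def cmb.simps e using w' I wc uc by (auto simp: m_comm)
    then show "\<exists>I. cmb G ys I = w" by blast
  qed
  moreover have "\<forall>i<length ys. \<forall>j<length ys. B (ys!i) (ys!j) =
     ((i = 0 \<and> j = 0) \<or> (1 \<le> i \<and> i \<le> length ys - 1 \<and> j = length ys - i))"
  proof (intro allI impI)
    fix i j assume i: "i < length ys" and j: "j < length ys"
    have ly: "length ys = length xs + 1" by (simp add: ys_def)
    have yi: "ys!i = (if i = 0 then m else xs ! (i - 1))" unfolding ys_def by (cases i) auto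
    have yj: "ys!j = (if j = 0 then m else xs ! (j - 1))" unfolding ys_def by (cases j) auto
    show "B (ys!i) (ys!j) = ((i = 0 \<and> j = 0) \<or> (1 \<le> i \<and> i \<le> length ys - 1 \<and> j = length ys - i))"
    proof (cases "i = 0")
      case True
      then show ?thesis
      proof (cases "j = 0")
        case True then show ?thesis using \<open>i = 0\<close> yi yj mm by simp
      next
        case False then show ?thesis using \<open>i = 0\<close> yi yj ly xW'[of "j - 1"] j by simp
      qed
    next
      case i0: False
      show ?thesis
      proof (cases "j = 0")
        case True then show ?thesis using i0 yi yj ly xW'[of "i - 1"] i by simp
      next
        case j0: False
        have "B (xs ! (i - 1)) (xs ! (j - 1)) = ((i - 1) + (j - 1) = length xs - 1)"
          using xs(5) i0 j0 i j ly by simp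
        then show ?thesis using i0 j0 yi yj ly i j by auto
      qed
    qed
  qed
  ultimately show ?thesis unfolding gl_def using xs(2)
    by (intro exI[of _ ys]) (simp add: ys_def)
qed

lemma gl_len: "gl xs \<Longrightarrow> gl ys \<Longrightarrow> length xs = length ys"
  unfolding gl_def by (metis power_inject_exp one_less_numeral_iff semiring_norm(76))

lemma parity_even: "gl xs \<Longrightarrow> even (length xs) \<Longrightarrow> \<not> B m m"
  using constr3 gl_len by metis

lemma parity_odd: "gl xs \<Longrightarrow> odd (length xs) \<Longrightarrow> B m m"
  using constr1 constr2 gl_len by metis

end

lemma lex_le:
  fixes xs ys :: "'a::linorder list"
  assumes "length xs = length ys" "\<forall>k<length xs. (\<forall>k'<k. xs!k' = ys!k') \<longrightarrow> xs!k \<le> ys!k"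
  shows "xs \<le> ys"
  using assms
proof (induction xs arbitrary: ys)
  case Nil then show ?case by simp
next
  case (Cons x xs)
  obtain y ys' where y: "ys = y # ys'" using Cons.prems(1) by (cases ys) auto
  have xy: "x \<le> y" using Cons.prems(2) y by auto
  show ?case
  proof (cases "x = y")
    case True
    have "xs \<le> ys'"
    proof (rule Cons.IH)
      show "length xs = length ys'" using Cons.prems(1) y by simp
      show "\<forall>k<length xs. (\<forall>k'<k. xs ! k' = ys' ! k') \<longrightarrow> xs ! k \<le> ys' ! k"
      proof (intro allI impI)
        fix k assume k: "k < length xs" and p: "\<forall>k'<k. xs ! k' = ys' ! k'"
        have "\<forall>k'<Suc k. (x#xs) ! k' = ys ! k'"
          using p True y by (auto simp: less_Suc_eq_0_disj)
        then have "(x#xs) ! Suc k \<le> ys ! Suc k" using Cons.prems(2)[rule_format, of "Suc k"] k by simp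
        then show "xs ! k \<le> ys' ! k" using y by simp
      qed
    qed
    then show ?thesis using True y by simp
  next
    case False
    then show ?thesis using xy y by simp
  qed
qed

lemma mat_le:
  assumes "\<forall>i<n. \<forall>j<n. (\<forall>i'<i. \<forall>j'<n. f i' j' = g i' j') \<longrightarrow> (\<forall>j'<j. f i j' = g i j') \<longrightarrow> f i j \<le> g i j"
  shows "mat_of n f \<le> mat_of n (g :: nat \<Rightarrow> nat \<Rightarrow> nat)"
  unfolding mat_of_def
proof (rule lex_le)
  show "length (map (\<lambda>i. map (f i) [0..<n]) [0..<n]) = length (map (\<lambda>i. map (g i) [0..<n]) [0..<n])" by simp
  show "\<forall>k<length (map (\<lambda>i. map (f i) [0..<n]) [0..<n]).
       (\<forall>k'<k. map (\<lambda>i. map (f i) [0..<n]) [0..<n] ! k' = map (\<lambda>i. map (g i) [0..<n]) [0..<n] ! k') \<longrightarrow>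
       map (\<lambda>i. map (f i) [0..<n]) [0..<n] ! k \<le> map (\<lambda>i. map (g i) [0..<n]) [0..<n] ! k"
  proof (intro allI impI)
    fix i assume i: "i < length (map (\<lambda>i. map (f i) [0..<n]) [0..<n])"
      and p: "\<forall>k'<i. map (\<lambda>i. map (f i) [0..<n]) [0..<n] ! k' = map (\<lambda>i. map (g i) [0..<n]) [0..<n] ! k'"
    have i': "i < n" using i by simp
    have rows: "\<forall>i'<i. \<forall>j'<n. f i' j' = g i' j'"
    proof (intro allI impI)
      fix i' j' assume "i' < i" "j' < n"
      then have "map (f i') [0..<n] = map (g i') [0..<n]" using p i' by auto
      then show "f i' j' = g i' j'" using \<open>j' < n\<close> by (metis diff_zero length_upt nth_map nth_upt add_0)
    qed
    show "map (\<lambda>i. map (f i) [0..<n]) [0..<n] ! i \<le> map (\<lambda>i. map (g i) [0..<n]) [0..<n] ! i"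
      using i' apply simp
      apply (rule lex_le)
       apply simp
      using assms rows i' by auto
  qed
qed

context bform begin

definition bas :: "'a list \<Rightarrow> bool" where
  "bas xs \<longleftrightarrow> set xs \<subseteq> carrier G \<and> inj_on (cmb G xs) (Pow {..<length xs}) \<and> (\<forall>g\<in>carrier G. \<exists>I. cmb G xs I = g)"

lemma cmb_insert:
  assumes "set xs \<subseteq> carrier G" "i < length xs" "K \<subseteq> {..<length xs}" "i \<notin> K"
  shows "cmb G xs (insert i K) = xs!i \<otimes> cmb G xs K"
proof -
  have fK: "finite K" using assms(3) finite_subset by blast
  have c: "\<forall>k\<in>K. xs!k \<in> carrier G" using assms(1,3) by (auto intro!: subsetD[OF _ nth_mem])
  have "cmb G xs (insert i K) = finprod G (\<lambda>k. xs!k) (insert i K)"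
    using assms by (intro finprod_cmb[symmetric]) auto
  also have "\<dots> = xs!i \<otimes> finprod G (\<lambda>k. xs!k) K"
    using assms fK c by (intro finprod_insert) (auto simp: Pi_def)
  also have "\<dots> = xs!i \<otimes> cmb G xs K" using assms by (simp add: finprod_cmb)
  finally show ?thesis .
qed

lemma key:
  assumes as: "bas as" and i: "i < length as"
    and s1: "\<forall>k<i. \<sigma> k < length as" and s2: "inj_on \<sigma> {..<i}"
    and rows: "\<forall>k<i. \<forall>c<length as. B (as!k) (as!c) = (c = \<sigma> k)"
    and rowi: "\<forall>c<length as. c \<notin> \<sigma> ` {..<i} \<longrightarrow> \<not> B (as!i) (as!c)"
  shows False
proof -
  have asc: "set as \<subseteq> carrier G" and inj: "inj_on (cmb G as) (Pow {..<length as})"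
    and sp: "\<forall>g\<in>carrier G. \<exists>I. cmb G as I = g" using as by (auto simp: bas_def)
  have nc: "\<And>k. k < length as \<Longrightarrow> as!k \<in> carrier G" using asc nth_mem by blast
  define K0 where "K0 = {k. k < i \<and> B (as!i) (as!(\<sigma> k))}"
  have K0s: "K0 \<subseteq> {..<length as}" using i by (auto simp: K0_def)
  define w where "w = cmb G as (insert i K0)"
  have w: "w = as!i \<otimes> cmb G as K0" unfolding w_def
    by (rule cmb_insert[OF asc i K0s]) (auto simp: K0_def)
  have cK0: "cmb G as K0 \<in> carrier G" using cmb_closed[OF asc] .
  have wc: "w \<in> carrier G" using w cK0 nc[OF i] by simp
  have orth: "\<not> B (as!c) w" if c: "c < length as" for c
  proof -
    have "B (as!c) w = (B (as!c) (as!i) \<noteq> B (as!c) (cmb G as K0))"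
      using w nc[OF c] nc[OF i] cK0 by (simp add: Blin)
    moreover have "B (as!c) (cmb G as K0) = B (as!c) (as!i)"
    proof (cases "c \<in> \<sigma> ` {..<i}")
      case True
      then obtain k1 where k1: "k1 < i" "c = \<sigma> k1" by auto
      have "B (as!c) (cmb G as K0) = (k1 \<in> K0 \<and> k1 < length as \<and> B (as!c) (as!k1))"
      proof (rule B_cmb_single[OF asc nc[OF c]])
        fix k assume "k \<in> K0" "k < length as" "k \<noteq> k1"
        then have "k < i" by (auto simp: K0_def)
        then have "\<sigma> k \<noteq> \<sigma> k1" using s2 k1 \<open>k \<noteq> k1\<close> by (auto dest: inj_onD)
        then show "\<not> B (as!c) (as!k)" using rows \<open>k < i\<close> c k1 Bsym nc \<open>k < length as\<close> by metis
      qed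
      moreover have "B (as!c) (as!k1)" using rows k1 c Bsym nc i by (metis order.strict_trans)
      ultimately show ?thesis using k1 i Bsym[OF nc[OF c] nc[OF i]] by (auto simp: K0_def)
    next
      case False
      have "B (as!c) (cmb G as K0) = (length as \<in> K0 \<and> length as < length as \<and> B (as!c) (as!length as))"
      proof (rule B_cmb_single[OF asc nc[OF c]])
        fix k assume "k \<in> K0" "k < length as" "k \<noteq> length as"
        then have "k < i" by (auto simp: K0_def)
        then have "c \<noteq> \<sigma> k" using False by auto
        then show "\<not> B (as!c) (as!k)" using rows \<open>k < i\<close> c Bsym nc \<open>k < length as\<close> by metis
      qed
      moreover have "\<not> B (as!i) (as!c)" using rowi c False by blast
      ultimately show ?thesis using Bsym[OF nc[OF c] nc[OF i]] by simp
    qed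
    ultimately show ?thesis by simp
  qed
  have "\<forall>g\<in>carrier G. \<not> B w g"
  proof
    fix g assume "g \<in> carrier G"
    then obtain J where J: "cmb G as J = g" using sp by blast
    have "B w (cmb G as J) = (length as \<in> J \<and> length as < length as \<and> B w (as!length as))"
    proof (rule B_cmb_single[OF asc wc])
      fix k assume "k \<in> J" "k < length as" "k \<noteq> length as"
      then show "\<not> B w (as!k)" using orth Bsym wc nc by metis
    qed
    then show "\<not> B w g" using J by simp
  qed
  then have "w = \<one>" using nondeg wc by blast
  moreover have "cmb G as {} = \<one>" by (induction as) auto
  moreover have "insert i K0 \<in> Pow {..<length as}" "{} \<in> Pow {..<length as}" using K0s i by auto
  ultimately have "insert i K0 = {}" using inj unfolding w_def by (metis inj_onD)
  then show False by simp
qed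

end

definition T1 :: "nat \<Rightarrow> nat \<Rightarrow> nat \<Rightarrow> bool" where "T1 n i j = (j = n - 1 - i)"
definition T2 :: "nat \<Rightarrow> nat \<Rightarrow> nat \<Rightarrow> bool" where
  "T2 n i j = ((i = 0 \<and> j = n - 1) \<or> (i = n - 1 \<and> j = 0) \<or> (i = n - 1 \<and> j = n - 1) \<or> (1 \<le> i \<and> i \<le> n - 2 \<and> j = n - 1 - i))"
definition T3 :: "nat \<Rightarrow> nat \<Rightarrow> nat \<Rightarrow> bool" where
  "T3 n i j = ((i = 0 \<and> j = 0) \<or> (1 \<le> i \<and> i \<le> n - 1 \<and> j = n - i))"

context bform begin

lemma rev_key:
  assumes as: "bas as" and n: "n = length as" and i: "i < n" and j: "j = n - 1 - i" and ij: "i \<le> j"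
    and rows: "\<forall>k<i. \<forall>c<n. B (as!k) (as!c) = (c = n - 1 - k)"
    and pre: "\<forall>c<j. \<not> B (as!i) (as!c)"
  shows "B (as!i) (as!j)"
proof (rule ccontr)
  assume nb: "\<not> B (as!i) (as!j)"
  show False
  proof (rule key[OF as, of i "\<lambda>k. n - 1 - k"])
    show "i < length as" using i n by simp
    show "\<forall>k<i. n - 1 - k < length as" using i n by auto
    show "inj_on (\<lambda>k. n - 1 - k) {..<i}" using i by (auto intro!: inj_onI)
    show "\<forall>k<i. \<forall>c<length as. B (as ! k) (as ! c) = (c = n - 1 - k)" using rows n by simp
    show "\<forall>c<length as. c \<notin> (\<lambda>k. n - 1 - k) ` {..<i} \<longrightarrow> \<not> B (as ! i) (as ! c)"
    proof (intro allI impI)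
      fix c assume c: "c < length as" and ni: "c \<notin> (\<lambda>k. n - 1 - k) ` {..<i}"
      have "c \<le> j"
      proof (rule ccontr)
        assume "\<not> c \<le> j"
        then have "n - 1 - c < i" "c = n - 1 - (n - 1 - c)" using c n j i by auto
        then show False using ni by blast
      qed
      then show "\<not> B (as ! i) (as ! c)" using pre nb by (cases "c = j") auto
    qed
  qed
qed

lemma lower1:
  assumes as: "bas as" and n: "n = length as" and i: "i < n" and j: "j < n"
    and P1: "\<forall>i'<i. \<forall>j'<n. B (as!i') (as!j') = T1 n i' j'"
    and P2: "\<forall>j'<j. B (as!i) (as!j') = T1 n i j'"
    and T: "T1 n i j"
  shows "B (as!i) (as!j)"
proof -
  have nc: "\<And>k. k < n \<Longrightarrow> as!k \<in> carrier G" using as n by (auto simp: bas_def intro!: subsetD[OF _ nth_mem])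
  have jj: "j = n - 1 - i" using T by (simp add: T1_def)
  show ?thesis
  proof (cases "j < i")
    case True
    then have "B (as!j) (as!i) = T1 n j i" using P1 i by auto
    then show ?thesis using Bsym[OF nc[OF i] nc[OF j]] True jj i by (simp add: T1_def)
  next
    case False
    show ?thesis
      by (rule rev_key[OF as n i jj]) (use False P1 P2 jj in \<open>auto simp: T1_def\<close>)
  qed
qed

lemma lower2:
  assumes as: "bas as" and n: "n = length as" and n3: "3 \<le> n" and m0: "as!0 = m"
    and i: "i < n" and j: "j < n"
    and P1: "\<forall>i'<i. \<forall>j'<n. B (as!i') (as!j') = T2 n i' j'"
    and P2: "\<forall>j'<j. B (as!i) (as!j') = T2 n i j'"
    and T: "T2 n i j"
  shows "B (as!i) (as!j)"
proof -
  have nc: "\<And>k. k < n \<Longrightarrow> as!k \<in> carrier G" using as n by (auto simp: bas_def intro!: subsetD[OF _ nth_mem])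
  show ?thesis
  proof (cases "i = n - 1")
    case True
    then have "j = 0 \<or> j = n - 1" using T n3 by (auto simp: T2_def)
    then show ?thesis
    proof
      assume j0: "j = 0"
      have "B (as!0) (as!(n-1)) = T2 n 0 (n-1)" using P1 True n3 by auto
      then show ?thesis using Bsym[OF nc[OF i] nc[OF j]] True j0 n3 by (simp add: T2_def)
    next
      assume jn: "j = n - 1"
      have "B (as!i) (as!0) = T2 n i 0" using P2 jn n3 by auto
      then show ?thesis using Bdiag[OF nc[OF i]] m0 True jn n3 by (simp add: T2_def)
    qed
  next
    case iF: False
    then have jj: "j = n - 1 - i" using T by (auto simp: T2_def)
    show ?thesis
    proof (cases "j < i")
      case True
      then have "B (as!j) (as!i) = T2 n j i" using P1 i by auto
      then show ?thesis using Bsym[OF nc[OF i] nc[OF j]] True jj i iF by (auto simp: T2_def)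
    next
      case False
      show ?thesis
      proof (rule rev_key[OF as n i jj])
        show "i \<le> j" using False by simp
        show "\<forall>k<i. \<forall>c<n. B (as ! k) (as ! c) = (c = n - 1 - k)"
          using P1 iF i n3 by (auto simp: T2_def)
        show "\<forall>c<j. \<not> B (as ! i) (as ! c)"
          using P2 iF i n3 jj by (auto simp: T2_def)
      qed
    qed
  qed
qed

lemma lower3:
  assumes as: "bas as" and n: "n = length as" and n3: "3 \<le> n" and m0: "as!0 = m" and mm: "B m m"
    and i: "i < n" and j: "j < n"
    and P1: "\<forall>i'<i. \<forall>j'<n. B (as!i') (as!j') = T3 n i' j'"
    and P2: "\<forall>j'<j. B (as!i) (as!j') = T3 n i j'"
    and T: "T3 n i j"
  shows "B (as!i) (as!j)"
proof -
  have nc: "\<And>k. k < n \<Longrightarrow> as!k \<in> carrier G" using as n by (auto simp: bas_def intro!: subsetD[OF _ nth_mem])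
  show ?thesis
  proof (cases "i = 0")
    case True
    then show ?thesis using T m0 mm by (simp add: T3_def)
  next
    case i0: False
    then have jj: "j = n - i" using T by (auto simp: T3_def)
    show ?thesis
    proof (cases "j < i")
      case True
      then have "B (as!j) (as!i) = T3 n j i" using P1 i by auto
      then show ?thesis using Bsym[OF nc[OF i] nc[OF j]] True jj i i0 by (auto simp: T3_def)
    next
      case False
      define \<sigma> where "\<sigma> = (\<lambda>k::nat. if k = 0 then 0 else n - k)"
      show ?thesis
      proof (rule ccontr)
        assume nb: "\<not> B (as!i) (as!j)"
        show False
        proof (rule key[OF as, of i \<sigma>])
          show "i < length as" using i n by simp
          show "\<forall>k<i. \<sigma> k < length as" using i n by (auto simp: \<sigma>_def)
          show "inj_on \<sigma> {..<i}" using i by (auto intro!: inj_onI simp: \<sigma>_def split: if_splits)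
          show "\<forall>k<i. \<forall>c<length as. B (as ! k) (as ! c) = (c = \<sigma> k)"
            using P1 i n by (auto simp: T3_def \<sigma>_def)
          show "\<forall>c<length as. c \<notin> \<sigma> ` {..<i} \<longrightarrow> \<not> B (as ! i) (as ! c)"
          proof (intro allI impI)
            fix c assume c: "c < length as" and ni: "c \<notin> \<sigma> ` {..<i}"
            have "c \<noteq> 0" using ni i0 by (auto simp: \<sigma>_def image_iff)
            have "c \<le> j"
            proof (rule ccontr)
              assume "\<not> c \<le> j"
              then have "n - c < i" "c = \<sigma> (n - c)" using c n jj i \<open>c \<noteq> 0\<close> by (auto simp: \<sigma>_def)
              then show False using ni by blast
            qed
            moreover have "c < j \<Longrightarrow> \<not> B (as ! i) (as ! c)" using P2 jj i0 by (auto simp: T3_def)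
            ultimately show "\<not> B (as ! i) (as ! c)" using nb by (cases "c = j") auto
          qed
        qed
      qed
    qed
  qed
qed

end

locale qstruct =
  fixes G :: "'a monoid" (structure) and m :: 'a and q :: "'a \<Rightarrow> 'a \<Rightarrow> 'b" and z :: 'b
  assumes lt: "local_type G m q z"
begin

lemma qs: "quat_struct G m q z" using lt by (simp add: local_type_def)
lemma grp: "group G" using qs by (simp add: quat_struct_def)
lemma sqG: "x \<in> carrier G \<Longrightarrow> x \<otimes> x = \<one>" using qs by (simp add: quat_struct_def)
lemma mcar: "m \<in> carrier G" using qs by (simp add: quat_struct_def)
lemma zQ: "z \<in> quats G q" using qs by (simp add: quat_struct_def)
lemma Q1: "a \<in> carrier G \<Longrightarrow> q a (m \<otimes> a) = z" using qs by (simp add: quat_struct_def)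
lemma Q2: "a \<in> carrier G \<Longrightarrow> b \<in> carrier G \<Longrightarrow> q a b = q b a" using qs by (simp add: quat_struct_def)
lemma Q3: "a \<in> carrier G \<Longrightarrow> b \<in> carrier G \<Longrightarrow> c \<in> carrier G \<Longrightarrow> q a b = q a c \<longleftrightarrow> q a (b \<otimes> c) = z"
  using qs by (simp add: quat_struct_def)
lemma finG: "finite (carrier G)" using lt by (simp add: local_type_def)
lemma qin: "a \<in> carrier G \<Longrightarrow> b \<in> carrier G \<Longrightarrow> q a b \<in> quats G q"
  by (auto simp: quats_def)

lemma cgrp: "comm_group G"
proof (rule group.group_comm_groupI[OF grp])
  fix x y assume x: "x \<in> carrier G" and y: "y \<in> carrier G"
  interpret group G by (rule grp)
  have ix: "inv x = x" using sqG[OF x] x by (simp add: inv_equality)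
  have iy: "inv y = y" using sqG[OF y] y by (simp add: inv_equality)
  have "inv (x \<otimes> y) = x \<otimes> y" using sqG[of "x \<otimes> y"] x y by (simp add: inv_equality)
  then show "x \<otimes> y = y \<otimes> x" using inv_mult_group[OF x y] ix iy by simp
qed

lemma e2: "e2grp G"
  using cgrp sqG by (simp add: e2grp_def e2grp_axioms_def)

definition e where "e = (SOME e. e \<in> quats G q \<and> e \<noteq> z)"

lemma Qze: "quats G q = {z, e}" "e \<noteq> z"
proof -
  have "card (quats G q) = 2" using lt by (simp add: local_type_def)
  then obtain x y where xy: "quats G q = {x, y}" "x \<noteq> y" by (auto simp: card_2_iff)
  then have ex: "\<exists>e. e \<in> quats G q \<and> e \<noteq> z" by blast
  then have "e \<in> quats G q \<and> e \<noteq> z" unfolding e_def by (rule someI_ex)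
  then show "quats G q = {z, e}" "e \<noteq> z" using xy zQ by auto
qed

lemma q1: "a \<in> carrier G \<Longrightarrow> q a \<one> = z"
  using Q3[of a \<one> \<one>] grp by (simp add: group.is_monoid monoid.l_one)

lemma qlin: "a \<in> carrier G \<Longrightarrow> b \<in> carrier G \<Longrightarrow> c \<in> carrier G \<Longrightarrow>
   (q a (b \<otimes> c) \<noteq> z) = ((q a b \<noteq> z) \<noteq> (q a c \<noteq> z))"
proof -
  assume a: "a \<in> carrier G" and b: "b \<in> carrier G" and c: "c \<in> carrier G"
  have 1: "q a b \<in> {z, e}" "q a c \<in> {z, e}" using qin[OF a b] qin[OF a c] Qze(1) by auto
  have 2: "q a b = q a c \<longleftrightarrow> q a (b \<otimes> c) = z" by (rule Q3[OF a b c])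
  show ?thesis using 1 2 by (cases "q a b = z"; cases "q a c = z") auto
qed

lemma nondegq: "a \<in> carrier G \<Longrightarrow> a \<noteq> \<one> \<Longrightarrow> \<exists>x\<in>carrier G. q a x \<noteq> z"
proof (rule ccontr)
  assume a: "a \<in> carrier G" "a \<noteq> \<one>" and n: "\<not> (\<exists>x\<in>carrier G. q a x \<noteq> z)"
  then have "a \<in> {a\<in>carrier G. \<forall>x\<in>carrier G. q a x = z}" by blast
  moreover have "{a\<in>carrier G. \<forall>x\<in>carrier G. q a x = z} = {\<one>}"
    using lt unfolding local_type_def nondegenerate_def by blast
  ultimately show False using a by blast
qed

sublocale bf: bform G "\<lambda>a b. q a b \<noteq> z" m
proof -
  interpret e2grp G by (rule e2)
  show "bform G (\<lambda>a b. q a b \<noteq> z) m"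
  proof (unfold_locales)
    show "finite (carrier G)" by (rule finG)
    show "\<And>a b. a \<in> carrier G \<Longrightarrow> b \<in> carrier G \<Longrightarrow> (q a b \<noteq> z) = (q b a \<noteq> z)" using Q2 by simp
    show "\<And>a b c. a \<in> carrier G \<Longrightarrow> b \<in> carrier G \<Longrightarrow> c \<in> carrier G \<Longrightarrow>
       (q a (b \<otimes> c) \<noteq> z) = ((q a b \<noteq> z) \<noteq> (q a c \<noteq> z))" by (rule qlin)
    show "\<And>a. a \<in> carrier G \<Longrightarrow> a \<noteq> \<one> \<Longrightarrow> \<exists>x\<in>carrier G. q a x \<noteq> z" by (rule nondegq)
    show "m \<in> carrier G" by (rule mcar)
    show "\<And>a. a \<in> carrier G \<Longrightarrow> (q a a \<noteq> z) = (q a m \<noteq> z)"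
    proof -
      fix a assume a: "a \<in> carrier G"
      show "(q a a \<noteq> z) = (q a m \<noteq> z)" using Q1[OF a] qlin[OF a mcar a] by auto
    qed
  qed
qed

end

context qstruct begin

abbreviation FF where "FF \<equiv> free_Abelian_group (quats G q)"
abbreviation HH where "HH \<equiv> BS_sub G q"
abbreviation EE where "EE \<equiv> r_coset FF HH (frag_of e)"

lemma eQ: "e \<in> quats G q" using Qze by auto

lemma relsF: "BS_rels G q \<subseteq> carrier FF"
proof
  fix r assume "r \<in> BS_rels G q"
  then obtain a b c where abc: "a \<in> carrier G" "b \<in> carrier G" "c \<in> carrier G"
    and r: "r = frag_of (q a b) + frag_of (q a c) - frag_of (q a (b \<otimes> c))"
    unfolding BS_rels_def by blast
  have "Poly_Mapping.keys r \<subseteq> {q a b, q a c, q a (b \<otimes> c)}"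
    unfolding r using keys_diff[of "frag_of (q a b) + frag_of (q a c)" "frag_of (q a (b \<otimes> c))"]
      keys_add[of "frag_of (q a b)" "frag_of (q a c)"] by (auto simp: keys_frag_of)
  moreover have "{q a b, q a c, q a (b \<otimes> c)} \<subseteq> quats G q"
    using abc qin grp by (auto intro: qin simp: group.is_monoid monoid.m_closed)
  ultimately show "r \<in> carrier FF" by auto
qed

lemma Hsub: "subgroup HH FF"
  unfolding BS_sub_def by (rule group.generate_is_subgroup[OF group_free_Abelian_group relsF])

lemma HF: "x \<in> HH \<Longrightarrow> Poly_Mapping.keys x \<subseteq> quats G q"
proof -
  assume "x \<in> HH"
  then have "x \<in> carrier FF" using subgroup.subset[OF Hsub] by blast
  then show ?thesis by simp
qed

lemma Hadd: "x \<in> HH \<Longrightarrow> y \<in> HH \<Longrightarrow> x + y \<in> HH"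
  using subgroup.m_closed[OF Hsub] by fastforce

lemma Hneg: "x \<in> HH \<Longrightarrow> - x \<in> HH"
  using subgroup.m_inv_closed[OF Hsub, of x] HF[of x] by simp

lemma Hdiff: "x \<in> HH \<Longrightarrow> y \<in> HH \<Longrightarrow> x - y \<in> HH"
  using Hadd[OF _ Hneg] by (metis diff_conv_add_uminus)

lemma H0: "0 \<in> HH"
  using subgroup.one_closed[OF Hsub] by simp

lemma Hrel: "a \<in> carrier G \<Longrightarrow> b \<in> carrier G \<Longrightarrow> c \<in> carrier G \<Longrightarrow>
   frag_of (q a b) + frag_of (q a c) - frag_of (q a (b \<otimes> c)) \<in> HH"
  unfolding BS_sub_def by (rule generate.incl) (auto simp: BS_rels_def)

lemma one_car: "\<one> \<in> carrier G" using grp by (simp add: group.is_monoid monoid.one_closed)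

lemma fz: "frag_of z \<in> HH"
proof -
  have "\<one> \<otimes> \<one> = \<one>" using sqG[OF one_car] .
  then have "frag_of (q \<one> \<one>) + frag_of (q \<one> \<one>) - frag_of (q \<one> \<one>) \<in> HH"
    using Hrel[OF one_car one_car one_car] by simp
  then show ?thesis using q1[OF one_car] by simp
qed

lemma fe2: "frag_of e + frag_of e \<in> HH"
proof -
  obtain a b where ab: "a \<in> carrier G" "b \<in> carrier G" "q a b = e" using eQ by (auto simp: quats_def)
  have "frag_of (q a b) + frag_of (q a b) - frag_of (q a (b \<otimes> b)) \<in> HH" using Hrel[OF ab(1,2,2)] .
  then have "frag_of e + frag_of e - frag_of z \<in> HH" using ab sqG q1 by simp
  then have "frag_of e + frag_of e - frag_of z + frag_of z \<in> HH" using Hadd fz by blast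
  then show ?thesis by simp
qed

lemma Hpar: "x \<in> HH \<Longrightarrow> even (Poly_Mapping.lookup x e)"
proof -
  define K where "K = {f \<in> carrier FF. even (Poly_Mapping.lookup f e)}"
  have sK: "subgroup K FF"
  proof (rule group.subgroupI[OF group_free_Abelian_group])
    show "K \<subseteq> carrier FF" by (auto simp: K_def)
    show "K \<noteq> {}" using H0 by (auto simp: K_def intro!: exI[of _ 0])
    show "\<And>a. a \<in> K \<Longrightarrow> inv\<^bsub>FF\<^esub> a \<in> K" by (auto simp: K_def keys_minus)
    show "\<And>a b. a \<in> K \<Longrightarrow> b \<in> K \<Longrightarrow> a \<otimes>\<^bsub>FF\<^esub> b \<in> K"
      using keys_add by (fastforce simp: K_def lookup_add)
  qed
  have "BS_rels G q \<subseteq> K"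
  proof
    fix r assume rr: "r \<in> BS_rels G q"
    then obtain a b c where abc: "a \<in> carrier G" "b \<in> carrier G" "c \<in> carrier G"
      and r: "r = frag_of (q a b) + frag_of (q a c) - frag_of (q a (b \<otimes> c))"
      unfolding BS_rels_def by blast
    have bc: "b \<otimes> c \<in> carrier G" using abc grp by (simp add: group.is_monoid monoid.m_closed)
    have v: "q a b \<in> {z,e}" "q a c \<in> {z,e}" "q a (b \<otimes> c) \<in> {z,e}" using qin abc bc Qze by auto
    have l: "(q a (b \<otimes> c) \<noteq> z) = ((q a b \<noteq> z) \<noteq> (q a c \<noteq> z))" by (rule qlin[OF abc])
    have "even (Poly_Mapping.lookup r e)"
    proof -
      have e1: "(q a b = e) = (q a b \<noteq> z)" "(q a c = e) = (q a c \<noteq> z)" "(q a (b \<otimes> c) = e) = (q a (b \<otimes> c) \<noteq> z)"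
        using v Qze(2) by auto
      have lr: "Poly_Mapping.lookup r e = (if q a b = e then 1 else 0) + (if q a c = e then 1 else 0) - (if q a (b \<otimes> c) = e then 1 else 0)"
        unfolding r by (simp add: lookup_add lookup_minus)
      show ?thesis unfolding lr e1 l by (cases "q a b \<noteq> z"; cases "q a c \<noteq> z") simp_all
    qed
    moreover have "r \<in> carrier FF" using rr relsF by blast
    ultimately show "r \<in> K" by (simp add: K_def)
  qed
  then have "HH \<subseteq> K" unfolding BS_sub_def
    by (rule group.generate_subgroup_incl[OF group_free_Abelian_group _ sK])
  then show "x \<in> HH \<Longrightarrow> even (Poly_Mapping.lookup x e)" by (auto simp: K_def)
qed

lemma Hchar:
  assumes "Poly_Mapping.keys x \<subseteq> quats G q"
  shows "(even (Poly_Mapping.lookup x e) \<longrightarrow> x \<in> HH) \<and> (odd (Poly_Mapping.lookup x e) \<longrightarrow> x - frag_of e \<in> HH)"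
proof (rule free_Abelian_group_induct[OF assms])
  show "(even (Poly_Mapping.lookup 0 e) \<longrightarrow> 0 \<in> HH) \<and> (odd (Poly_Mapping.lookup 0 e) \<longrightarrow> 0 - frag_of e \<in> HH)"
    using H0 by simp
next
  fix x y :: "'b \<Rightarrow>\<^sub>0 int"
  assume hx: "(even (Poly_Mapping.lookup x e) \<longrightarrow> x \<in> HH) \<and> (odd (Poly_Mapping.lookup x e) \<longrightarrow> x - frag_of e \<in> HH)"
    and hy: "(even (Poly_Mapping.lookup y e) \<longrightarrow> y \<in> HH) \<and> (odd (Poly_Mapping.lookup y e) \<longrightarrow> y - frag_of e \<in> HH)"
  have a: "x - y = (x - frag_of e) - (y - frag_of e)" by simp
  have b: "x - y - frag_of e = (x - frag_of e) - y" by simp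
  have c: "x - y - frag_of e = x - (y - frag_of e) - (frag_of e + frag_of e)" by simp
  have l: "Poly_Mapping.lookup (x - y) e = Poly_Mapping.lookup x e - Poly_Mapping.lookup y e" by (simp add: lookup_minus)
  show "(even (Poly_Mapping.lookup (x - y) e) \<longrightarrow> x - y \<in> HH) \<and> (odd (Poly_Mapping.lookup (x - y) e) \<longrightarrow> x - y - frag_of e \<in> HH)"
  proof (cases "even (Poly_Mapping.lookup x e)")
    case ex: True
    show ?thesis
    proof (cases "even (Poly_Mapping.lookup y e)")
      case True
      then have "x - y \<in> HH" using hx hy ex Hdiff by blast
      then show ?thesis using l ex True by simp
    next
      case False
      then have "x - y - frag_of e \<in> HH" unfolding c using hx hy ex Hdiff fe2 by blast
      then show ?thesis using l ex False by simp
    qed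
  next
    case ox: False
    show ?thesis
    proof (cases "even (Poly_Mapping.lookup y e)")
      case True
      then have "x - y - frag_of e \<in> HH" unfolding b using hx hy ox Hdiff by blast
      then show ?thesis using l ox True by simp
    next
      case False
      then have "x - y \<in> HH" unfolding a using hx hy ox Hdiff by blast
      then show ?thesis using l ox False by simp
    qed
  qed
next
  fix s assume "s \<in> quats G q"
  then have "s = z \<or> s = e" using Qze by auto
  then show "(even (Poly_Mapping.lookup (frag_of s) e) \<longrightarrow> frag_of s \<in> HH) \<and> (odd (Poly_Mapping.lookup (frag_of s) e) \<longrightarrow> frag_of s - frag_of e \<in> HH)"
    using fz Qze(2) H0 by auto
qed

end

context qstruct begin

lemma BSeq: "BS G q = FF Mod HH" by (simp add: BS_def)

lemma Hnormal: "HH \<lhd> FF"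
  using comm_group.subgroup_imp_normal[OF abelian_free_Abelian_group Hsub] .

lemma feF: "frag_of e \<in> carrier FF" using eQ by simp

lemma coset_H: "x \<in> HH \<Longrightarrow> r_coset FF HH x = HH"
  using subgroup.rcos_const[OF Hsub group_free_Abelian_group] by blast

lemma coset_E: assumes "x \<in> carrier FF" "x - frag_of e \<in> HH" shows "r_coset FF HH x = EE"
proof -
  have "x \<in> r_coset FF HH (frag_of e)"
    unfolding r_coset_def using assms(2) by (auto intro!: bexI[of _ "x - frag_of e"])
  then show ?thesis using group.repr_independence[OF group_free_Abelian_group _ feF Hsub] by metis
qed

lemma HE: "HH \<noteq> EE"
proof
  assume "HH = EE"
  moreover have "frag_of e \<in> EE" unfolding r_coset_def using H0 by (auto intro!: bexI[of _ 0])
  ultimately have "frag_of e \<in> HH" by simp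
  then show False using Hpar by fastforce
qed

lemma carrier_BS: "carrier (BS G q) = {HH, EE}"
proof -
  have "carrier (BS G q) = (\<lambda>x. r_coset FF HH x) ` carrier FF" unfolding BSeq by (rule carrier_FactGroup)
  also have "\<dots> = {HH, EE}"
  proof
    show "(\<lambda>x. r_coset FF HH x) ` carrier FF \<subseteq> {HH, EE}"
    proof
      fix y assume "y \<in> (\<lambda>x. r_coset FF HH x) ` carrier FF"
      then obtain x where x: "x \<in> carrier FF" "y = r_coset FF HH x" by blast
      show "y \<in> {HH, EE}"
      proof (cases "even (Poly_Mapping.lookup x e)")
        case True then show ?thesis using Hchar[of x] x coset_H by simp
      next
        case False then show ?thesis using Hchar[of x] x coset_E by simp
      qed
    qed
    show "{HH, EE} \<subseteq> (\<lambda>x. r_coset FF HH x) ` carrier FF"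
      using coset_H[OF H0] feF by (auto intro!: image_eqI[of _ _ 0])
  qed
  finally show ?thesis .
qed

lemma BS_of_z: "BS_of G q z = HH" unfolding BS_of_def using coset_H[OF fz] .
lemma BS_of_e: "BS_of G q e = EE" unfolding BS_of_def ..

lemma BScomm: "comm_group (BS G q)"
  unfolding BSeq by (rule comm_group.abelian_FactGroup[OF abelian_free_Abelian_group Hsub])

lemma one_BS: "\<one>\<^bsub>BS G q\<^esub> = HH" unfolding BSeq by simp

lemma EE_sq: "EE \<otimes>\<^bsub>BS G q\<^esub> EE = HH"
proof -
  have "EE \<otimes>\<^bsub>BS G q\<^esub> EE = r_coset FF HH (frag_of e \<otimes>\<^bsub>FF\<^esub> frag_of e)"
    unfolding BSeq using normal.rcos_sum[OF Hnormal feF feF] by simp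
  also have "\<dots> = HH" using coset_H[OF fe2] by simp
  finally show ?thesis .
qed

lemma EE_car: "EE \<in> carrier (BS G q)" using carrier_BS by simp

lemma fp0: "finprod (BS G q) f {} = HH"
  using comm_monoid.finprod_empty[OF comm_group.axioms(1)[OF BScomm]] one_BS by simp

lemma fp1: "f 0 \<in> carrier (BS G q) \<Longrightarrow> finprod (BS G q) f {0} = f 0"
proof -
  assume f: "f 0 \<in> carrier (BS G q)"
  interpret C: comm_group "BS G q" by (rule BScomm)
  have "finprod (BS G q) f (insert 0 {}) = f 0 \<otimes>\<^bsub>BS G q\<^esub> finprod (BS G q) f {}"
    using f by (intro C.finprod_insert) auto
  then show ?thesis using f by simp
qed

lemma Pow1: "Pow {..<Suc 0} = {{}, {0}}" by (auto simp: lessThan_Suc)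

lemma f2_BS_iff: "f2_basis (BS G q) bs \<longleftrightarrow> bs = [EE]"
proof
  assume f: "f2_basis (BS G q) bs"
  then have bij: "bij_betw (\<lambda>I. finprod (BS G q) (\<lambda>i. bs ! i) I) (Pow {..<length bs}) (carrier (BS G q))"
    and sb: "set bs \<subseteq> carrier (BS G q)" by (auto simp: f2_basis_def)
  have "card (Pow {..<length bs}) = card (carrier (BS G q))" using bij_betw_same_card[OF bij] .
  then have "(2::nat) ^ length bs = 2 ^ 1" using HE by (simp add: carrier_BS card_Pow)
  then have l: "length bs = 1" by (metis power_inject_exp one_less_numeral_iff semiring_norm(76))
  then obtain b where b: "bs = [b]" by (cases bs) auto
  have bc: "b \<in> carrier (BS G q)" using sb b by simp
  have inj: "inj_on (\<lambda>I. finprod (BS G q) (\<lambda>i. bs ! i) I) (Pow {..<length bs})" using bij by (simp add: bij_betw_def)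
  have "finprod (BS G q) (\<lambda>i. bs ! i) {} \<noteq> finprod (BS G q) (\<lambda>i. bs ! i) {0}"
    using inj l by (auto dest: inj_onD)
  then have "b \<noteq> HH" using fp0[of "\<lambda>i. bs ! i"] fp1[of "\<lambda>i. bs ! i"] b bc by auto
  then show "bs = [EE]" using bc carrier_BS b by simp
next
  assume bs: "bs = [EE]"
  have sq: "\<forall>x\<in>carrier (BS G q). x \<otimes>\<^bsub>BS G q\<^esub> x = \<one>\<^bsub>BS G q\<^esub>"
  proof -
    interpret C: comm_group "BS G q" by (rule BScomm)
    have "HH \<otimes>\<^bsub>BS G q\<^esub> HH = HH" using C.l_one[OF C.one_closed] one_BS by metis
    then show ?thesis using EE_sq one_BS carrier_BS by auto
  qed
  have img: "(\<lambda>I. finprod (BS G q) (\<lambda>i. [EE] ! i) I) ` {{}, {0}} = {HH, EE}"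
    using fp0 fp1[of "\<lambda>i. [EE] ! i"] EE_car by auto
  have inj: "inj_on (\<lambda>I. finprod (BS G q) (\<lambda>i. [EE] ! i) I) {{}, {0}}"
    using fp0 fp1[of "\<lambda>i. [EE] ! i"] EE_car HE by (auto simp: inj_on_def)
  show "f2_basis (BS G q) bs"
    unfolding f2_basis_def bs using sq EE_car img inj carrier_BS Pow1 by (simp add: bij_betw_def)
qed

lemma phi_H: "phi (BS G q) [EE] HH = 0"
proof -
  have "(THE I. I \<subseteq> {..<length [EE]} \<and> finprod (BS G q) (\<lambda>i. [EE] ! i) I = HH) = {}"
  proof (rule the_equality)
    show "{} \<subseteq> {..<length [EE]} \<and> finprod (BS G q) (\<lambda>i. [EE] ! i) {} = HH" using fp0 by simp
    fix I assume I: "I \<subseteq> {..<length [EE]} \<and> finprod (BS G q) (\<lambda>i. [EE] ! i) I = HH"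
    then have "I \<in> {{}, {0}}" using Pow1 by auto
    then show "I = {}" using I fp1[of "\<lambda>i. [EE] ! i"] EE_car HE by auto
  qed
  then show ?thesis by (simp add: phi_def)
qed

lemma phi_E: "phi (BS G q) [EE] EE = 1"
proof -
  have "(THE I. I \<subseteq> {..<length [EE]} \<and> finprod (BS G q) (\<lambda>i. [EE] ! i) I = EE) = {0}"
  proof (rule the_equality)
    show "{0} \<subseteq> {..<length [EE]} \<and> finprod (BS G q) (\<lambda>i. [EE] ! i) {0} = EE"
      using fp1[of "\<lambda>i. [EE] ! i"] EE_car by simp
    fix I assume I: "I \<subseteq> {..<length [EE]} \<and> finprod (BS G q) (\<lambda>i. [EE] ! i) I = EE"
    then have "I \<in> {{}, {0}}" using Pow1 by auto
    then show "I = {0}" using I fp0 HE by auto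
  qed
  then show ?thesis by (simp add: phi_def)
qed

lemma phi_q: "a \<in> carrier G \<Longrightarrow> b \<in> carrier G \<Longrightarrow>
   phi (BS G q) [EE] (BS_of G q (q a b)) = (if q a b \<noteq> z then 1 else 0)"
  using qin[of a b] Qze BS_of_z BS_of_e phi_H phi_E by auto

end

context qstruct begin

abbreviation bmat :: "nat \<Rightarrow> 'a list \<Rightarrow> nat list list" where
  "bmat n as \<equiv> mat_of n (\<lambda>i j. if q (as!i) (as!j) \<noteq> z then 1 else 0)"

lemma card_order: "has_order G n \<Longrightarrow> card (carrier G) = 2 ^ n"
proof -
  assume "has_order G n"
  then obtain as where "f2_basis G as" "length as = n" by (auto simp: has_order_def)
  then have "bij_betw (\<lambda>I. finprod G (\<lambda>i. as ! i) I) (Pow {..<n}) (carrier G)" by (auto simp: f2_basis_def)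
  from bij_betw_same_card[OF this] show ?thesis by (simp add: card_Pow)
qed

lemma pow2_inj: "(2::nat) ^ a = 2 ^ b \<Longrightarrow> a = b"
  by (metis power_inject_exp one_less_numeral_iff semiring_norm(76))

lemma f2_props:
  assumes "f2_basis G as" "has_order G n"
  shows "length as = n" "bf.bas as" "bf.gl as"
proof -
  have sc: "set as \<subseteq> carrier G" and bij: "bij_betw (\<lambda>I. finprod G (\<lambda>i. as ! i) I) (Pow {..<length as}) (carrier G)"
    using assms(1) unfolding f2_basis_def by blast+
  have c: "card (carrier G) = 2 ^ length as" using bij_betw_same_card[OF bij] by (simp add: card_Pow)
  then have "(2::nat) ^ length as = 2 ^ n" using card_order[OF assms(2)] by simp
  then show "length as = n" by (rule pow2_inj)
  have eqf: "\<And>I. I \<in> Pow {..<length as} \<Longrightarrow> finprod G (\<lambda>i. as ! i) I = cmb G as I"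
  proof -
    fix I assume "I \<in> Pow {..<length as}"
    then have "I \<subseteq> {..<length as}" by simp
    then show "finprod G (\<lambda>i. as ! i) I = cmb G as I" by (rule bf.finprod_cmb[OF sc])
  qed
  have i0: "inj_on (\<lambda>I. finprod G (\<lambda>i. as ! i) I) (Pow {..<length as})" using bij by (simp add: bij_betw_def)
  have "inj_on (\<lambda>I. finprod G (\<lambda>i. as ! i) I) (Pow {..<length as}) = inj_on (cmb G as) (Pow {..<length as})"
    by (rule inj_on_cong) (rule eqf)
  then have inj: "inj_on (cmb G as) (Pow {..<length as})" using i0 by simp
  have sp: "\<forall>g\<in>carrier G. \<exists>I. cmb G as I = g"
  proof
    fix g assume g: "g \<in> carrier G"
    have "g \<in> (\<lambda>I. finprod G (\<lambda>i. as ! i) I) ` Pow {..<length as}"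
      using bij g by (simp add: bij_betw_def)
    then obtain I where I: "I \<in> Pow {..<length as}" "finprod G (\<lambda>i. as ! i) I = g"
      by (rule imageE) simp
    then have "cmb G as I = g" using eqf[OF I(1)] by simp
    then show "\<exists>I. cmb G as I = g" by blast
  qed
  show "bf.bas as" using sc inj sp by (simp add: bf.bas_def)
  show "bf.gl as" using sc c sp by (simp add: bf.gl_def)
qed

lemma gl_f2:
  assumes "bf.gl xs"
  shows "f2_basis G xs"
proof -
  have sc: "set xs \<subseteq> carrier G" and c: "card (carrier G) = 2 ^ length xs"
    and sp: "\<forall>g\<in>carrier G. \<exists>I. cmb G xs I = g" using assms by (auto simp: bf.gl_def)
  let ?f = "\<lambda>I. finprod G (\<lambda>i. xs ! i) I"
  have eqf: "\<And>I. I \<in> Pow {..<length xs} \<Longrightarrow> ?f I = cmb G xs I"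
  proof -
    fix I assume "I \<in> Pow {..<length xs}"
    then have "I \<subseteq> {..<length xs}" by simp
    then show "?f I = cmb G xs I" by (rule bf.finprod_cmb[OF sc])
  qed
  have img: "?f ` Pow {..<length xs} = carrier G"
  proof
    show "?f ` Pow {..<length xs} \<subseteq> carrier G"
      using eqf bf.cmb_closed[OF sc] by auto
    show "carrier G \<subseteq> ?f ` Pow {..<length xs}"
    proof
      fix g assume "g \<in> carrier G"
      then obtain I where "cmb G xs I = g" using sp by blast
      then have "cmb G xs (I \<inter> {..<length xs}) = g" using bf.cmb_restrict by metis
      moreover have "I \<inter> {..<length xs} \<in> Pow {..<length xs}" by auto
      ultimately show "g \<in> ?f ` Pow {..<length xs}" using eqf by (metis image_eqI)
    qed
  qed
  have "inj_on ?f (Pow {..<length xs})"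
    by (rule eq_card_imp_inj_on) (use img c in \<open>auto simp: card_Pow\<close>)
  then show ?thesis using img sc sqG by (simp add: f2_basis_def bij_betw_def)
qed

lemma qmat_eq: "set as \<subseteq> carrier G \<Longrightarrow> qmat G q as [EE] = bmat (length as) as"
  unfolding qmat_def mat_of_def
proof (intro map_cong refl)
  fix i j assume sc: "set as \<subseteq> carrier G" and i: "i \<in> set [0..<length as]" and j: "j \<in> set [0..<length as]"
  have "as!i \<in> carrier G" "as!j \<in> carrier G" using i j sc nth_mem by (auto simp: subset_iff)
  then show "phi (BS G q) [EE] (BS_of G q (q (as ! i) (as ! j))) = (if q (as ! i) (as ! j) \<noteq> z then 1 else 0)"
    by (rule phi_q)
qed

lemma Sset:
  assumes "has_order G n"
  shows "{qmat G q as bs | as bs. qbasis G m as \<and> f2_basis (BS G q) bs} = bmat n ` {as. qbasis G m as}"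
proof -
  have "\<And>as. qbasis G m as \<Longrightarrow> qmat G q as [EE] = bmat n as"
  proof -
    fix as assume "qbasis G m as"
    then have "f2_basis G as" by (simp add: qbasis_def)
    moreover have "length as = n" using f2_props(1)[OF \<open>f2_basis G as\<close> assms] .
    moreover have "set as \<subseteq> carrier G" using \<open>f2_basis G as\<close> by (simp add: f2_basis_def)
    ultimately show "qmat G q as [EE] = bmat n as" using qmat_eq by simp
  qed
  note qe = this
  show ?thesis
  proof
    show "{qmat G q as bs | as bs. qbasis G m as \<and> f2_basis (BS G q) bs} \<subseteq> bmat n ` {as. qbasis G m as}"
    proof
      fix M assume "M \<in> {qmat G q as bs | as bs. qbasis G m as \<and> f2_basis (BS G q) bs}"
      then obtain as bs where M: "M = qmat G q as bs" "qbasis G m as" "f2_basis (BS G q) bs" by blast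
      then have "bs = [EE]" using f2_BS_iff by simp
      then have "M = bmat n as" using M qe by simp
      then show "M \<in> bmat n ` {as. qbasis G m as}" using M(2) by simp
    qed
    show "bmat n ` {as. qbasis G m as} \<subseteq> {qmat G q as bs | as bs. qbasis G m as \<and> f2_basis (BS G q) bs}"
    proof
      fix M assume "M \<in> bmat n ` {as. qbasis G m as}"
      then obtain as where M: "M = bmat n as" "qbasis G m as" by blast
      then have "M = qmat G q as [EE]" using qe by simp
      moreover have "f2_basis (BS G q) [EE]" using f2_BS_iff by simp
      ultimately show "M \<in> {qmat G q as bs | as bs. qbasis G m as \<and> f2_basis (BS G q) bs}"
        using M(2) by blast
    qed
  qed
qed

lemma Sfin:
  assumes "has_order G n"
  shows "finite (bmat n ` {as. qbasis G m as})"
proof -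
  have "{as. qbasis G m as} \<subseteq> {xs. set xs \<subseteq> carrier G \<and> length xs = n}"
  proof
    fix as assume "as \<in> {as. qbasis G m as}"
    then have f: "f2_basis G as" by (simp add: qbasis_def)
    have "length as = n" using f2_props(1)[OF f assms] .
    moreover have "set as \<subseteq> carrier G" using f by (simp add: f2_basis_def)
    ultimately show "as \<in> {xs. set xs \<subseteq> carrier G \<and> length xs = n}" by simp
  qed
  then have "finite {as. qbasis G m as}" using finite_lists_length_eq[OF finG] finite_subset by blast
  then show ?thesis by simp
qed

lemma normal_eq:
  assumes ho: "has_order G n"
    and ex: "\<exists>as. qbasis G m as \<and> bmat n as = mat_of n (\<lambda>i j. if Tb i j then 1 else 0)"
    and low: "\<And>as. qbasis G m as \<Longrightarrow> \<forall>i<n. \<forall>j<n. (\<forall>i'<i. \<forall>j'<n. (q (as!i') (as!j') \<noteq> z) = Tb i' j')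
        \<longrightarrow> (\<forall>j'<j. (q (as!i) (as!j') \<noteq> z) = Tb i j') \<longrightarrow> Tb i j \<longrightarrow> q (as!i) (as!j) \<noteq> z"
  shows "normal_matrix G m q = mat_of n (\<lambda>i j. if Tb i j then 1 else 0)"
  unfolding normal_matrix_def Sset[OF ho]
proof (rule Min_eqI[OF Sfin[OF ho]])
  show "mat_of n (\<lambda>i j. if Tb i j then 1 else 0) \<in> bmat n ` {as. qbasis G m as}"
  proof -
    obtain as where "qbasis G m as" "bmat n as = mat_of n (\<lambda>i j. if Tb i j then 1 else 0)" using ex by blast
    then show ?thesis by (intro image_eqI[of _ "bmat n" as]) simp_all
  qed
  fix y assume "y \<in> bmat n ` {as. qbasis G m as}"
  then obtain as where as: "qbasis G m as" "y = bmat n as" by blast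
  show "mat_of n (\<lambda>i j. if Tb i j then 1 else 0) \<le> y"
    unfolding as(2)
  proof (rule mat_le, intro allI impI)
    fix i j assume i: "i < n" and j: "j < n"
      and p1: "\<forall>i'<i. \<forall>j'<n. (if Tb i' j' then 1 else 0) = (if q (as!i') (as!j') \<noteq> z then 1 else (0::nat))"
      and p2: "\<forall>j'<j. (if Tb i j' then 1 else 0) = (if q (as!i) (as!j') \<noteq> z then 1 else (0::nat))"
    have ifeq: "\<And>P Q. ((if P then 1 else 0) = (if Q then 1 else (0::nat))) = (Q = P)" by auto
    have p1': "\<forall>i'<i. \<forall>j'<n. (q (as!i') (as!j') \<noteq> z) = Tb i' j'"
      using p1 unfolding ifeq .
    have p2': "\<forall>j'<j. (q (as!i) (as!j') \<noteq> z) = Tb i j'"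
      using p2 unfolding ifeq .
    have "Tb i j \<longrightarrow> q (as!i) (as!j) \<noteq> z" using low[OF as(1), rule_format, OF i j p1'[rule_format] p2'[rule_format]] by (rule impI)
    then show "(if Tb i j then 1 else 0) \<le> (if q (as!i) (as!j) \<noteq> z then 1 else (0::nat))"
      by simp
  qed
qed

end

lemma mat_of_cong: "(\<And>i j. i < n \<Longrightarrow> j < n \<Longrightarrow> f i j = g i j) \<Longrightarrow> mat_of n f = mat_of n g"
  unfolding mat_of_def by (intro map_cong refl) auto

theorem proposition5:
  fixes G :: "'a monoid" and m :: 'a and q :: "'a \<Rightarrow> 'a \<Rightarrow> 'b" and z :: 'b and n :: nat
  assumes "local_type G m q z" and "has_order G n"
  shows "(even n \<and> m = \<one>\<^bsub>G\<^esub> \<longrightarrow>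
            normal_matrix G m q = mat_of n (\<lambda>i j. if j = n - 1 - i then 1 else 0))
       \<and> (even n \<and> m \<noteq> \<one>\<^bsub>G\<^esub> \<longrightarrow>
            normal_matrix G m q = mat_of n (\<lambda>i j.
              if (i = 0 \<and> j = n - 1) \<or> (i = n - 1 \<and> j = 0) \<or> (i = n - 1 \<and> j = n - 1)
                 \<or> (1 \<le> i \<and> i \<le> n - 2 \<and> j = n - 1 - i) then 1 else 0))
       \<and> (odd n \<longrightarrow>
            normal_matrix G m q = mat_of n (\<lambda>i j.
              if (i = 0 \<and> j = 0) \<or> (1 \<le> i \<and> i \<le> n - 1 \<and> j = n - i) then 1 else 0))"
proof -
  interpret qstruct G m q z using assms(1) by (simp add: qstruct_def)
  note ho = assms(2)
  obtain n' where n': "n' \<ge> 3" "has_order G n'" using assms(1) by (auto simp: local_type_def)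
  have "(2::nat) ^ n = 2 ^ n'" using card_order[OF ho] card_order[OF n'(2)] by simp
  then have n3: "3 \<le> n" using pow2_inj n'(1) by metis
  obtain as0 where as0: "f2_basis G as0" "length as0 = n" using ho by (auto simp: has_order_def)
  have gl0: "bf.gl as0" using f2_props(3)[OF as0(1) ho] .
  have qb: "\<And>as. qbasis G m as \<Longrightarrow> bf.bas as \<and> length as = n \<and> (m \<noteq> \<one>\<^bsub>G\<^esub> \<longrightarrow> as ! 0 = m)"
    using f2_props[OF _ ho] by (simp add: qbasis_def)
  have lenx: "\<And>xs. bf.gl xs \<Longrightarrow> length xs = n" using bf.gl_len[OF _ gl0] as0(2) by simp
  have part1: "even n \<and> m = \<one>\<^bsub>G\<^esub> \<longrightarrow> normal_matrix G m q = mat_of n (\<lambda>i j. if T1 n i j then 1 else 0)"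
  proof
    assume h: "even n \<and> m = \<one>\<^bsub>G\<^esub>"
    show "normal_matrix G m q = mat_of n (\<lambda>i j. if T1 n i j then 1 else 0)"
    proof (rule normal_eq[OF ho])
      obtain xs where xs: "bf.gl xs" "\<forall>i<length xs. \<forall>j<length xs. (q (xs!i) (xs!j) \<noteq> z) = (j = length xs - 1 - i)"
        using bf.constr1 h by blast
      have l: "length xs = n" using lenx[OF xs(1)] .
      have "qbasis G m xs" using gl_f2[OF xs(1)] h by (simp add: qbasis_def)
      moreover have "bmat n xs = mat_of n (\<lambda>i j. if T1 n i j then 1 else 0)"
        by (rule mat_of_cong) (use xs(2) l in \<open>simp add: T1_def\<close>)
      ultimately show "\<exists>as. qbasis G m as \<and> bmat n as = mat_of n (\<lambda>i j. if T1 n i j then 1 else 0)" by blast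
    next
      fix as assume "qbasis G m as"
      then have b: "bf.bas as" "length as = n" using qb by auto
      show "\<forall>i<n. \<forall>j<n. (\<forall>i'<i. \<forall>j'<n. (q (as!i') (as!j') \<noteq> z) = T1 n i' j')
        \<longrightarrow> (\<forall>j'<j. (q (as!i) (as!j') \<noteq> z) = T1 n i j') \<longrightarrow> T1 n i j \<longrightarrow> q (as!i) (as!j) \<noteq> z"
        using bf.lower1[OF b(1) b(2)[symmetric]] by blast
    qed
  qed
  have part2: "even n \<and> m \<noteq> \<one>\<^bsub>G\<^esub> \<longrightarrow> normal_matrix G m q = mat_of n (\<lambda>i j. if T2 n i j then 1 else 0)"
  proof
    assume h: "even n \<and> m \<noteq> \<one>\<^bsub>G\<^esub>"
    have mm: "\<not> (q m m \<noteq> z)" using bf.parity_even[OF gl0] h as0(2) by simp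
    show "normal_matrix G m q = mat_of n (\<lambda>i j. if T2 n i j then 1 else 0)"
    proof (rule normal_eq[OF ho])
      obtain xs where xs: "bf.gl xs" "xs \<noteq> []" "xs!0 = m"
        "\<forall>i<length xs. \<forall>j<length xs. (q (xs!i) (xs!j) \<noteq> z) =
     ((i = 0 \<and> j = length xs - 1) \<or> (i = length xs - 1 \<and> j = 0) \<or> (i = length xs - 1 \<and> j = length xs - 1)
      \<or> (1 \<le> i \<and> i \<le> length xs - 2 \<and> j = length xs - 1 - i))"
        using bf.constr2 h mm by blast
      have l: "length xs = n" using lenx[OF xs(1)] .
      have "qbasis G m xs" using gl_f2[OF xs(1)] xs(2,3) by (simp add: qbasis_def)
      moreover have "bmat n xs = mat_of n (\<lambda>i j. if T2 n i j then 1 else 0)"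
        by (rule mat_of_cong) (use xs(4) l in \<open>simp add: T2_def\<close>)
      ultimately show "\<exists>as. qbasis G m as \<and> bmat n as = mat_of n (\<lambda>i j. if T2 n i j then 1 else 0)" by blast
    next
      fix as assume "qbasis G m as"
      then have b: "bf.bas as" "length as = n" "as!0 = m" using qb h by auto
      show "\<forall>i<n. \<forall>j<n. (\<forall>i'<i. \<forall>j'<n. (q (as!i') (as!j') \<noteq> z) = T2 n i' j')
        \<longrightarrow> (\<forall>j'<j. (q (as!i) (as!j') \<noteq> z) = T2 n i j') \<longrightarrow> T2 n i j \<longrightarrow> q (as!i) (as!j) \<noteq> z"
        using bf.lower2[OF b(1) b(2)[symmetric] n3 b(3)] by blast
    qed
  qed
  have part3: "odd n \<longrightarrow> normal_matrix G m q = mat_of n (\<lambda>i j. if T3 n i j then 1 else 0)"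
  proof
    assume h: "odd n"
    have mm: "q m m \<noteq> z" using bf.parity_odd[OF gl0] h as0(2) by simp
    have m1: "m \<noteq> \<one>\<^bsub>G\<^esub>" using mm q1[OF one_car] by auto
    show "normal_matrix G m q = mat_of n (\<lambda>i j. if T3 n i j then 1 else 0)"
    proof (rule normal_eq[OF ho])
      obtain xs where xs: "bf.gl xs" "xs \<noteq> []" "xs!0 = m"
        "\<forall>i<length xs. \<forall>j<length xs. (q (xs!i) (xs!j) \<noteq> z) =
     ((i = 0 \<and> j = 0) \<or> (1 \<le> i \<and> i \<le> length xs - 1 \<and> j = length xs - i))"
        using bf.constr3 mm by blast
      have l: "length xs = n" using lenx[OF xs(1)] .
      have "qbasis G m xs" using gl_f2[OF xs(1)] xs(2,3) by (simp add: qbasis_def)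
      moreover have "bmat n xs = mat_of n (\<lambda>i j. if T3 n i j then 1 else 0)"
        by (rule mat_of_cong) (use xs(4) l in \<open>simp add: T3_def\<close>)
      ultimately show "\<exists>as. qbasis G m as \<and> bmat n as = mat_of n (\<lambda>i j. if T3 n i j then 1 else 0)" by blast
    next
      fix as assume "qbasis G m as"
      then have b: "bf.bas as" "length as = n" "as!0 = m" using qb m1 by auto
      show "\<forall>i<n. \<forall>j<n. (\<forall>i'<i. \<forall>j'<n. (q (as!i') (as!j') \<noteq> z) = T3 n i' j')
        \<longrightarrow> (\<forall>j'<j. (q (as!i) (as!j') \<noteq> z) = T3 n i j') \<longrightarrow> T3 n i j \<longrightarrow> q (as!i) (as!j) \<noteq> z"
        using bf.lower3[OF b(1) b(2)[symmetric] n3 b(3) mm] by blast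
    qed
  qed
  show ?thesis using part1 part2 part3 unfolding T1_def T2_def T3_def by simp
qed

end
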